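(* Let $\Omega\subset\mathbb H$ be an axially symmetric slice domain and $\omega=[g_v]$ a vectorial class on $\Omega$ whose global minimal representative $g_v$ is such that $\sqrt{g_v^s}$ is globally defined on $\Omega$ (i.e. there is a slice-regular slice-preserving $h$ on $\Omega$ with $h^2=g_v^s$). If $Z(\omega)=\varnothing$, then $\Gamma(\Omega,\mathcal K_\omega)\cong\mathbb Z$ (the sections being $2n\pi g_v/\sqrt{g_v^s}$, $n\in\mathbb Z$). If $Z(\omega)\neq\varnothing$, then $\Gamma(\Omega,\mathcal K_\omega)=0$.
   Context: $\mathbb S=\{I\in\mathbb H:I^2=-1\}$, $\mathbb C_I=\mathbb R+I\mathbb R$. Axially symmetric set: $x+Iy\in E\Rightarrow x+Jy\in E$ for all $J\in\mathbb S$. A slice domain is a domain $\Omega$ with $\Omega\cap\mathbb R\ne\varnothing$ and $\Omega\cap\mathbb C_I$ connected for every $I$. $\mathcal{SR}$: slice-regular functions ($f(x+Jy)=F_1(x+iy)+JF_2(x+iy)$, $F_1+\mathbf iF_2$ holomorphic into $\mathbb H\otimes\mathbb C$, $F_1(\bar z)=F_1(z)$, $F_2(\bar z)=-F_2(z)$), with $*$-product induced by stem functions; $\mathcal{SR}_{\mathbb R}$ the slice-preserving ones. $f=f_0+f_v$ with $f_v=f_1i+f_2j+f_3k$, $f_l\in\mathcal{SR}_{\mathbb R}$; $f^s=f_0^2+f_1^2+f_2^2+f_3^2$. A vectorial class $\omega$: given by local vectorial functions, locally pairwise linearly dependent over $\mathcal{SR}_{\mathbb R}$; a global minimal representative is a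 vectorial $g_v\in\mathcal{SR}(\Omega)$ representing $\omega$ with no real zeros and no spherical zeros, and $Z(\omega)$ is its zero set. $\mathcal{SR}_\omega$ = functions whose vectorial part is locally dependent over $\mathcal{SR}_{\mathbb R}$ with $g_v$. $\exp_*(f)=\sum_{n\ge0}f^{*n}/n!$. $\mathcal K_\omega$ is the sheaf (on axially symmetric open sets) of germs $f\in\mathcal{SR}_\omega$ with $\exp_*(f)=1$, and $\Gamma(\Omega,\mathcal K_\omega)$ its global sections. *)

theory Defs
  imports "HOL-Analysis.Analysis"
begin

text \<open>A quaternion a + b i + c j + d k is the tuple (a,b,c,d) :: real^4 (as a product type,
 which carries the Euclidean topology of R^4). Elements of H (x) C are tuples of
 complex numbers (a0 + a1 i + a2 j + a3 k with complex coefficients a_l, the complex unit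
 commuting with i,j,k); the algebra structure is the Hamilton product with coefficients in C.\<close>

type_synonym 'a quatern = "'a \<times> 'a \<times> 'a \<times> 'a"
type_synonym quat = "real quatern"
type_synonym bquat = "complex quatern"

definition hmul :: "('a::comm_ring) quatern \<Rightarrow> 'a quatern \<Rightarrow> 'a quatern" where
  "hmul p q = (case p of (a1,b1,c1,d1) \<Rightarrow> case q of (a2,b2,c2,d2) \<Rightarrow>
     (a1*a2 - b1*b2 - c1*c2 - d1*d2,
      a1*b2 + b1*a2 + c1*d2 - d1*c2,
      a1*c2 - b1*d2 + c1*a2 + d1*b2,
      a1*d2 + b1*c2 - c1*b2 + d1*a2))"

definition hone :: "('a::comm_ring_1) quatern" where "hone = (1,0,0,0)"

fun hpow :: "('a::comm_ring_1) quatern \<Rightarrow> nat \<Rightarrow> 'a quatern" where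
  "hpow x 0 = hone"
| "hpow x (Suc n) = hmul x (hpow x n)"

definition c0 :: "'a quatern \<Rightarrow> 'a" where "c0 p = fst p"
definition c1 :: "'a quatern \<Rightarrow> 'a" where "c1 p = fst (snd p)"
definition c2 :: "'a quatern \<Rightarrow> 'a" where "c2 p = fst (snd (snd p))"
definition c3 :: "'a quatern \<Rightarrow> 'a" where "c3 p = snd (snd (snd p))"

definition qof_real :: "real \<Rightarrow> quat" where "qof_real x = (x,0,0,0)"
definition qi :: quat where "qi = (0,1,0,0)"
definition qvec :: "quat \<Rightarrow> quat" where "qvec q = (0, c1 q, c2 q, c3 q)"
definition qconj :: "quat \<Rightarrow> quat" where "qconj q = (c0 q, - c1 q, - c2 q, - c3 q)"
definition qinv :: "quat \<Rightarrow> quat" where "qinv q = (1 / (norm q)\<^sup>2) *\<^sub>R qconj q"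

text \<open>real and imaginary parts of an element of H (x) C (F = F1 + i F2)\<close>
definition bre :: "bquat \<Rightarrow> quat" where
  "bre p = (Re (c0 p), Re (c1 p), Re (c2 p), Re (c3 p))"
definition bim :: "bquat \<Rightarrow> quat" where
  "bim p = (Im (c0 p), Im (c1 p), Im (c2 p), Im (c3 p))"
definition bcnj :: "bquat \<Rightarrow> bquat" where
  "bcnj p = (cnj (c0 p), cnj (c1 p), cnj (c2 p), cnj (c3 p))"

definition imag_units :: "quat set" ("\<SS>") where
  "\<SS> = {I. hmul I I = - hone}"

definition slice_plane :: "quat \<Rightarrow> quat set" where
  "slice_plane I = {qof_real x + y *\<^sub>R I | x y. True}"

definition axially_symmetric :: "quat set \<Rightarrow> bool" where
  "axially_symmetric E \<longleftrightarrow> (\<forall>x y I J. I \<in> \<SS> \<longrightarrow> J \<in> \<SS> \<longrightarrow>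
      qof_real x + y *\<^sub>R I \<in> E \<longrightarrow> qof_real x + y *\<^sub>R J \<in> E)"

definition slice_domain :: "quat set \<Rightarrow> bool" where
  "slice_domain \<Omega> \<longleftrightarrow> open \<Omega> \<and> connected \<Omega> \<and> (\<exists>x. qof_real x \<in> \<Omega>) \<and>
      (\<forall>I\<in>\<SS>. connected (\<Omega> \<inter> slice_plane I))"

definition slice_dom :: "quat set \<Rightarrow> complex set" where
  "slice_dom \<Omega> = {z. qof_real (Re z) + Im z *\<^sub>R qi \<in> \<Omega>}"

text \<open>The slice function induced by a stem F = F1 + i F2 : D \<rightarrow> H (x) C:
  f(x + J y) = F1(x + i y) + J F2(x + i y); we write q = x + J y with y = |Im q| \<ge> 0.\<close>
definition slicefun :: "(complex \<Rightarrow> bquat) \<Rightarrow> quat \<Rightarrow> quat" where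
  "slicefun G q = (let z = Complex (c0 q) (norm (qvec q));
                       J = (1 / norm (qvec q)) *\<^sub>R qvec q
                   in bre (G z) + hmul J (bim (G z)))"

text \<open>Holomorphic stem: F1 + i F2 holomorphic into H (x) C (componentwise), F1(conj z) = F1(z),
  F2(conj z) = - F2(z).\<close>
definition holo_stem :: "complex set \<Rightarrow> (complex \<Rightarrow> bquat) \<Rightarrow> bool" where
  "holo_stem D G \<longleftrightarrow>
     (\<lambda>z. c0 (G z)) holomorphic_on D \<and> (\<lambda>z. c1 (G z)) holomorphic_on D \<and>
     (\<lambda>z. c2 (G z)) holomorphic_on D \<and> (\<lambda>z. c3 (G z)) holomorphic_on D \<and>
     (\<forall>z\<in>D. G (cnj z) = bcnj (G z))"

definition is_stem :: "quat set \<Rightarrow> (complex \<Rightarrow> bquat) \<Rightarrow> (quat \<Rightarrow> quat) \<Rightarrow> bool" where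
  "is_stem \<Omega> G f \<longleftrightarrow> holo_stem (slice_dom \<Omega>) G \<and> (\<forall>q\<in>\<Omega>. f q = slicefun G q)"

definition slice_regular :: "quat set \<Rightarrow> (quat \<Rightarrow> quat) \<Rightarrow> bool" where
  "slice_regular \<Omega> f \<longleftrightarrow> (\<exists>G. is_stem \<Omega> G f)"

definition stem_of :: "quat set \<Rightarrow> (quat \<Rightarrow> quat) \<Rightarrow> complex \<Rightarrow> bquat" where
  "stem_of \<Omega> f = (SOME G. is_stem \<Omega> G f)"

text \<open>Slice-preserving: F1, F2 real valued.\<close>
definition slice_preserving :: "quat set \<Rightarrow> (quat \<Rightarrow> quat) \<Rightarrow> bool" where
  "slice_preserving \<Omega> f \<longleftrightarrow> (\<exists>G. is_stem \<Omega> G f \<and>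
      (\<forall>z\<in>slice_dom \<Omega>. c1 (G z) = 0 \<and> c2 (G z) = 0 \<and> c3 (G z) = 0))"

definition vectorial :: "quat set \<Rightarrow> (quat \<Rightarrow> quat) \<Rightarrow> bool" where
  "vectorial \<Omega> f \<longleftrightarrow> (\<exists>G. is_stem \<Omega> G f \<and> (\<forall>z\<in>slice_dom \<Omega>. c0 (G z) = 0))"

definition star :: "quat set \<Rightarrow> (quat \<Rightarrow> quat) \<Rightarrow> (quat \<Rightarrow> quat) \<Rightarrow> quat \<Rightarrow> quat" where
  "star \<Omega> f g = slicefun (\<lambda>z. hmul (stem_of \<Omega> f z) (stem_of \<Omega> g z))"

definition star_pow :: "quat set \<Rightarrow> (quat \<Rightarrow> quat) \<Rightarrow> nat \<Rightarrow> quat \<Rightarrow> quat" where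
  "star_pow \<Omega> f n = slicefun (\<lambda>z. hpow (stem_of \<Omega> f z) n)"

definition vect_part :: "quat set \<Rightarrow> (quat \<Rightarrow> quat) \<Rightarrow> quat \<Rightarrow> quat" where
  "vect_part \<Omega> f = slicefun (\<lambda>z. (0, c1 (stem_of \<Omega> f z), c2 (stem_of \<Omega> f z), c3 (stem_of \<Omega> f z)))"

definition symmetrization :: "quat set \<Rightarrow> (quat \<Rightarrow> quat) \<Rightarrow> quat \<Rightarrow> quat" where
  "symmetrization \<Omega> f = slicefun (\<lambda>z.
     ((c0 (stem_of \<Omega> f z))\<^sup>2 + (c1 (stem_of \<Omega> f z))\<^sup>2 + (c2 (stem_of \<Omega> f z))\<^sup>2
        + (c3 (stem_of \<Omega> f z))\<^sup>2, 0, 0, 0))"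

definition star_exp_is_one :: "quat set \<Rightarrow> (quat \<Rightarrow> quat) \<Rightarrow> bool" where
  "star_exp_is_one \<Omega> f \<longleftrightarrow>
     (\<forall>q\<in>\<Omega>. (\<lambda>n. (1 / fact n) *\<^sub>R star_pow \<Omega> f n q) sums hone)"

definition locally_dependent :: "quat set \<Rightarrow> (quat \<Rightarrow> quat) \<Rightarrow> (quat \<Rightarrow> quat) \<Rightarrow> bool" where
  "locally_dependent \<Omega> fv gv \<longleftrightarrow> (\<forall>p\<in>\<Omega>. \<exists>U. p \<in> U \<and> U \<subseteq> \<Omega> \<and> open U \<and> connected U \<and>
      axially_symmetric U \<and>
      (\<exists>\<alpha> \<beta>. slice_preserving U \<alpha> \<and> slice_preserving U \<beta> \<and>
         (\<exists>q\<in>U. \<alpha> q \<noteq> 0 \<or> \<beta> q \<noteq> 0) \<and>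
         (\<forall>q\<in>U. star U \<alpha> fv q + star U \<beta> gv q = 0)))"

definition SR_omega :: "quat set \<Rightarrow> (quat \<Rightarrow> quat) \<Rightarrow> (quat \<Rightarrow> quat) \<Rightarrow> bool" where
  "SR_omega \<Omega> gv f \<longleftrightarrow> slice_regular \<Omega> f \<and> locally_dependent \<Omega> (vect_part \<Omega> f) gv"

text \<open>Global sections over \<Omega> of K_omega (omega = [gv]): slice-regular f on \<Omega> which are
  (locally) in SR_omega and satisfy exp_*(f) = 1. Functions are only relevant on \<Omega>.\<close>
definition K_sections :: "quat set \<Rightarrow> (quat \<Rightarrow> quat) \<Rightarrow> (quat \<Rightarrow> quat) set" where
  "K_sections \<Omega> gv = {f. SR_omega \<Omega> gv f \<and> star_exp_is_one \<Omega> f}"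

definition minimal_representative :: "quat set \<Rightarrow> (quat \<Rightarrow> quat) \<Rightarrow> bool" where
  "minimal_representative \<Omega> gv \<longleftrightarrow> vectorial \<Omega> gv \<and>
     (\<forall>x. qof_real x \<in> \<Omega> \<longrightarrow> gv (qof_real x) \<noteq> 0) \<and>
     (\<forall>x y. y \<noteq> 0 \<longrightarrow> qof_real x + y *\<^sub>R qi \<in> \<Omega> \<longrightarrow>
         (\<exists>J\<in>\<SS>. gv (qof_real x + y *\<^sub>R J) \<noteq> 0))"

definition zero_set :: "quat set \<Rightarrow> (quat \<Rightarrow> quat) \<Rightarrow> quat set" where
  "zero_set \<Omega> gv = {q\<in>\<Omega>. gv q = 0}"

end

theory Submission
  imports Defs "HOL-Complex_Analysis.Conformal_Mappings"
begin


definition piz :: "quat \<Rightarrow> complex" where "piz q = Complex (c0 q) (norm (qvec q))"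
definition Jq :: "quat \<Rightarrow> quat" where "Jq q = (1 / norm (qvec q)) *\<^sub>R qvec q"
definition Lq :: "quat \<Rightarrow> bquat \<Rightarrow> quat" where "Lq J P = bre P + hmul J (bim P)"
definition cmul :: "complex \<Rightarrow> bquat \<Rightarrow> bquat" where
  "cmul a p = (a * c0 p, a * c1 p, a * c2 p, a * c3 p)"
definition iota :: "complex \<Rightarrow> quat" where "iota z = qof_real (Re z) + Im z *\<^sub>R qi"

lemmas cdefs = c0_def c1_def c2_def c3_def

lemma quat_zero: "(0::quat) = (0,0,0,0)" by (simp add: zero_prod_def)
lemma bquat_zero: "(0::bquat) = (0,0,0,0)" by (simp add: zero_prod_def)

lemma slicefun_eq: "slicefun G q = Lq (Jq q) (G (piz q))"
  by (simp add: slicefun_def Lq_def Jq_def piz_def Let_def)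

lemma norm_quat: "norm (q::quat) = sqrt ((c0 q)^2 + (c1 q)^2 + (c2 q)^2 + (c3 q)^2)"
  by (cases q) (simp add: norm_Pair cdefs)

lemma imag_units_iff: "J \<in> \<SS> \<longleftrightarrow> (\<exists>b c d. J = (0,b,c,d) \<and> b^2 + c^2 + d^2 = 1)"
proof
  assume J: "J \<in> \<SS>"
  obtain a b c d where Jd: "J = (a,b,c,d)" by (cases J) auto
  from J have e: "a*a - b*b - c*c - d*d = -1" "a*b + b*a = 0" "a*c + c*a = 0" "a*d + d*a = 0"
    unfolding imag_units_def Jd hmul_def hone_def by simp_all
  have "a = 0"
  proof (rule ccontr)
    assume a0: "a \<noteq> 0"
    have "b = 0" using e(2) a0 by (simp add: mult.commute)
    moreover have "c = 0" using e(3) a0 by (simp add: mult.commute)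
    moreover have "d = 0" using e(4) a0 by (simp add: mult.commute)
    ultimately have "a*a = -1" using e(1) by simp
    then show False by (smt (verit) zero_le_square)
  qed
  then have "b^2 + c^2 + d^2 = 1" using e(1) by (simp add: power2_eq_square)
  then show "\<exists>b c d. J = (0,b,c,d) \<and> b^2 + c^2 + d^2 = 1" using Jd \<open>a = 0\<close> by blast
next
  assume "\<exists>b c d. J = (0,b,c,d) \<and> b^2 + c^2 + d^2 = 1"
  then obtain b c d where "J = (0,b,c,d)" "b^2 + c^2 + d^2 = 1" by blast
  then show "J \<in> \<SS>" by (simp add: imag_units_def hmul_def hone_def power2_eq_square)
qed

lemma unit_aux: "b^2 + c^2 + d^2 = 1 \<Longrightarrow> b * (b * z) + (c * (c * z) + d * (d * z)) = (z::real)"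
proof -
  assume a: "b^2 + c^2 + d^2 = 1"
  have "b * (b * z) + (c * (c * z) + d * (d * z)) = (b^2+c^2+d^2)*z"
    by (simp add: algebra_simps power2_eq_square)
  then show ?thesis using a by simp
qed

lemma Lq_cmul_gen:
  assumes "b^2 + c^2 + d^2 = 1"
  shows "Lq (0,b,c,d) (cmul a X) = hmul (Lq (0,b,c,d) (a,0,0,0)) (Lq (0,b,c,d) X)"
proof -
  obtain x0 x1 x2 x3 where X: "X = (x0,x1,x2,x3)" by (cases X) auto
  show ?thesis
  unfolding X
  apply (simp add: Lq_def cmul_def hmul_def bre_def bim_def cdefs)
  apply (simp add: algebra_simps unit_aux[OF assms])
  done
qed

lemma Lq_cmul:
  assumes "J \<in> \<SS>"
  shows "Lq J (cmul a X) = hmul (Lq J (a,0,0,0)) (Lq J X)"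
proof -
  obtain b c d where "J = (0,b,c,d)" "b^2 + c^2 + d^2 = 1" using assms imag_units_iff by auto
  then show ?thesis using Lq_cmul_gen by simp
qed

lemma Lq_cmul0:
  assumes "Im a = 0"
  shows "Lq 0 (cmul a X) = hmul (Lq 0 (a,0,0,0)) (Lq 0 X)"
  using assms by (cases X) (simp add: Lq_def cmul_def hmul_def bre_def bim_def cdefs quat_zero)

lemma hmul_JJ:
  assumes "J \<in> \<SS>"
  shows "hmul J (hmul J y) = - y"
proof -
  obtain b c d where J: "J = (0,b,c,d)" "b^2 + c^2 + d^2 = 1" using assms imag_units_iff by auto
  obtain y0 y1 y2 y3 where y: "y = (y0,y1,y2,y3)" by (cases y) auto
  show ?thesis unfolding J y
    apply (simp add: hmul_def)
    apply (simp add: algebra_simps unit_aux[OF J(2)])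
    done
qed

lemma hmul_zero_right[simp]: "hmul J (0::quat) = 0"
  by (cases J) (simp add: hmul_def quat_zero)
lemma hmul_zero_left[simp]: "hmul (0::quat) J = 0"
  by (cases J) (simp add: hmul_def quat_zero)
lemma hmul_diff_right: "hmul J ((x::quat) - y) = hmul J x - hmul J y"
  by (cases J; cases x; cases y) (simp add: hmul_def algebra_simps)
lemma hmul_add_right: "hmul J ((x::quat) + y) = hmul J x + hmul J y"
  by (cases J; cases x; cases y) (simp add: hmul_def algebra_simps)
lemma hmul_uminus_left: "hmul (- J) (x::quat) = - hmul J x"
  by (cases J; cases x) (simp add: hmul_def algebra_simps)
lemma hmul_scaleR_left: "hmul (r *\<^sub>R J) (x::quat) = r *\<^sub>R hmul J x"
  by (cases J; cases x) (simp add: hmul_def algebra_simps)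
lemma hmul_scaleR_right: "hmul J (r *\<^sub>R (x::quat)) = r *\<^sub>R hmul J x"
  by (cases J; cases x) (simp add: hmul_def algebra_simps)

lemma hmul_J_inj:
  assumes "J \<in> \<SS>" "hmul J y = 0" shows "(y::quat) = 0"
  using hmul_JJ[OF assms(1), of y] assms(2) by simp

lemma bre_bim_eq: "bre P = bre Q \<Longrightarrow> bim P = bim Q \<Longrightarrow> P = Q"
  by (cases P; cases Q) (simp add: bre_def bim_def cdefs complex_eq_iff)

lemma bre_add: "bre (P + Q) = bre P + bre Q" and bim_add: "bim (P + Q) = bim P + bim Q"
  by (cases P; cases Q; simp add: bre_def bim_def cdefs)+
lemma bre_diff: "bre (P - Q) = bre P - bre Q" and bim_diff: "bim (P - Q) = bim P - bim Q"
  by (cases P; cases Q; simp add: bre_def bim_def cdefs)+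
lemma bre_scaleR: "bre (r *\<^sub>R P) = r *\<^sub>R bre P" and bim_scaleR: "bim (r *\<^sub>R P) = r *\<^sub>R bim P"
  by (cases P; simp add: bre_def bim_def cdefs)+
lemma bre_zero[simp]: "bre 0 = 0" and bim_zero[simp]: "bim 0 = 0"
  by (simp_all add: bre_def bim_def cdefs quat_zero bquat_zero)

lemma Lq_add: "Lq J (P + Q) = Lq J P + Lq J Q"
  by (simp add: Lq_def bre_add bim_add hmul_add_right)
lemma Lq_diff: "Lq J (P - Q) = Lq J P - Lq J Q"
  by (simp add: Lq_def bre_diff bim_diff hmul_diff_right)
lemma Lq_scaleR: "Lq J (r *\<^sub>R P) = r *\<^sub>R Lq J P"
  by (simp add: Lq_def bre_scaleR bim_scaleR hmul_scaleR_right scaleR_add_right)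
lemma Lq_zero[simp]: "Lq J 0 = 0"
  by (simp add: Lq_def)
lemma Lq_hone: "Lq J hone = hone"
  by (simp add: Lq_def hone_def bre_def bim_def cdefs flip: quat_zero)

lemma pm_zero:
  fixes x y :: "'a::real_vector"
  assumes "x + y = 0" "x - y = 0" shows "x = 0" "y = 0"
proof -
  have "x = y" using assms(2) by simp
  then have "y + y = 0" using assms(1) by simp
  then have "2 *\<^sub>R y = 0" by (simp add: scaleR_2)
  then show "y = 0" by simp
  then show "x = 0" using \<open>x = y\<close> by simp
qed

lemma Lq_pm_inj:
  assumes "J \<in> \<SS>" "Lq J P = Lq J Q" "Lq (-J) P = Lq (-J) Q"
  shows "P = Q"
proof -
  have a: "(bre P - bre Q) + hmul J (bim P - bim Q) = 0"
    using assms(2) by (simp add: Lq_def hmul_diff_right algebra_simps)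
  have b: "(bre P - bre Q) - hmul J (bim P - bim Q) = 0"
    using assms(3) by (simp add: Lq_def hmul_diff_right hmul_uminus_left algebra_simps)
  have "bre P - bre Q = 0" "hmul J (bim P - bim Q) = 0" using pm_zero[OF a b] by auto
  moreover from this have "bim P - bim Q = 0" using hmul_J_inj[OF assms(1)] by blast
  ultimately show ?thesis by (intro bre_bim_eq) auto
qed


lemma qi_S: "qi \<in> \<SS>" and mqi_S: "- qi \<in> \<SS>"
  by (auto simp: imag_units_iff qi_def)

lemma qvec_zero_real: "qvec q = 0 \<Longrightarrow> q = qof_real (c0 q)"
  by (cases q) (simp add: qvec_def qof_real_def cdefs quat_zero)

lemma piz_real[simp]: "piz (qof_real x) = complex_of_real x"
  by (simp add: piz_def qof_real_def qvec_def cdefs complex_eq_iff quat_zero)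
lemma Jq_real[simp]: "Jq (qof_real x) = 0"
  by (simp add: Jq_def qof_real_def qvec_def cdefs quat_zero)

lemma norm_qvec: "norm (qvec q) = sqrt ((c1 q)^2 + (c2 q)^2 + (c3 q)^2)"
  by (simp add: norm_quat qvec_def cdefs)

lemma Jq_unit:
  assumes "qvec q \<noteq> 0" shows "Jq q \<in> \<SS>"
proof -
  define n where "n = norm (qvec q)"
  have n0: "n > 0" using assms by (simp add: n_def)
  have nn: "n^2 = (c1 q)^2 + (c2 q)^2 + (c3 q)^2" using norm_qvec[of q]
    by (simp add: n_def)
  have "Jq q = (1/n) *\<^sub>R qvec q" by (simp add: Jq_def n_def)
  also have "\<dots> = (0, c1 q / n, c2 q / n, c3 q / n)" by (simp add: qvec_def)
  finally have "Jq q = (0, c1 q / n, c2 q / n, c3 q / n)" .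
  moreover have "(c1 q / n)^2 + (c2 q / n)^2 + (c3 q / n)^2 = 1"
    using n0 nn by (simp add: power_divide add_divide_distrib[symmetric] flip: nn)
  ultimately show ?thesis by (auto simp: imag_units_iff)
qed

lemma q_decomp: "q = qof_real (c0 q) + norm (qvec q) *\<^sub>R Jq q"
proof (cases "qvec q = 0")
  case True then show ?thesis using qvec_zero_real[OF True] by (simp add: Jq_def)
next
  case False
  then have "norm (qvec q) *\<^sub>R Jq q = qvec q" by (simp add: Jq_def)
  then show ?thesis by (cases q) (simp add: qvec_def qof_real_def cdefs)
qed

lemma piz_xyJ:
  assumes "J \<in> \<SS>" "y > 0"
  shows "piz (qof_real x + y *\<^sub>R J) = Complex x y" "Jq (qof_real x + y *\<^sub>R J) = J"
proof -
  obtain b c d where J: "J = (0,b,c,d)" "b^2 + c^2 + d^2 = 1" using assms(1) imag_units_iff by auto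
  have v: "qvec (qof_real x + y *\<^sub>R J) = y *\<^sub>R J"
    by (simp add: J qvec_def qof_real_def cdefs)
  have nJ: "norm J = 1" using J by (simp add: norm_quat cdefs)
  have n: "norm (qvec (qof_real x + y *\<^sub>R J)) = y" using assms(2) nJ by (simp add: v)
  show "piz (qof_real x + y *\<^sub>R J) = Complex x y"
    by (simp add: piz_def n) (simp add: J qof_real_def cdefs)
  show "Jq (qof_real x + y *\<^sub>R J) = J"
    using assms(2) by (simp add: Jq_def n v nJ)
qed

lemma axsymD: "axially_symmetric U \<Longrightarrow> I \<in> \<SS> \<Longrightarrow> J \<in> \<SS> \<Longrightarrow>
   qof_real x + y *\<^sub>R I \<in> U \<Longrightarrow> qof_real x + y *\<^sub>R J \<in> U"
  unfolding axially_symmetric_def by blast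

lemma slice_dom_iff: "z \<in> slice_dom U \<longleftrightarrow> iota z \<in> U"
  by (simp add: slice_dom_def iota_def)

lemma piz_in:
  assumes "axially_symmetric U" "q \<in> U" shows "piz q \<in> slice_dom U"
proof (cases "qvec q = 0")
  case True
  then have "iota (piz q) = q" using qvec_zero_real[OF True]
    by (simp add: iota_def piz_def)
  then show ?thesis using assms by (simp add: slice_dom_iff)
next
  case False
  have "qof_real (c0 q) + norm (qvec q) *\<^sub>R Jq q \<in> U" using q_decomp[of q] assms(2) by simp
  then have "qof_real (c0 q) + norm (qvec q) *\<^sub>R qi \<in> U"
    using axsymD[OF assms(1) Jq_unit[OF False] qi_S] by blast
  then show ?thesis by (simp add: slice_dom_iff iota_def piz_def)
qed

lemma slice_dom_cnj:
  assumes "axially_symmetric U" "z \<in> slice_dom U" shows "cnj z \<in> slice_dom U"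
proof -
  have "qof_real (Re z) + Im z *\<^sub>R qi \<in> U" using assms(2) by (simp add: slice_dom_def)
  then have "qof_real (Re z) + Im z *\<^sub>R (- qi) \<in> U" using axsymD[OF assms(1) qi_S mqi_S] by blast
  then show ?thesis by (simp add: slice_dom_def)
qed

lemma piz_iota: "Im z \<ge> 0 \<Longrightarrow> piz (iota z) = z"
  by (simp add: piz_def iota_def qvec_def qof_real_def qi_def cdefs complex_eq_iff norm_quat quat_zero)

lemma Lq_real_bcnj:
  assumes "bcnj P = P" shows "Lq 0 P = bre P" "bim P = 0"
proof -
  obtain a b c d where P: "P = (a,b,c,d)" by (cases P) auto
  from assms have "Im a = 0" "Im b = 0" "Im c = 0" "Im d = 0"
    by (auto simp: P bcnj_def cdefs complex_eq_iff)
  then show "bim P = 0" by (simp add: bim_def P cdefs quat_zero)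
  then show "Lq 0 P = bre P" by (simp add: Lq_def)
qed

lemma stem_unique:
  assumes U: "axially_symmetric U"
    and s1: "\<forall>z\<in>slice_dom U. K1 (cnj z) = bcnj (K1 z)"
    and s2: "\<forall>z\<in>slice_dom U. K2 (cnj z) = bcnj (K2 z)"
    and eq: "\<forall>q\<in>U. slicefun K1 q = slicefun K2 q"
    and z: "z \<in> slice_dom U"
  shows "K1 z = K2 z"
proof -
  have up: "K1 w = K2 w" if w: "w \<in> slice_dom U" "Im w \<ge> 0" for w
  proof (cases "Im w = 0")
    case True
    have q: "qof_real (Re w) \<in> U" using w(1) True by (simp add: slice_dom_def)
    have wr: "w = complex_of_real (Re w)" using True by (simp add: complex_eq_iff)
    have c1: "bcnj (K1 w) = K1 w" using s1 w(1) True by (metis complex_cnj_complex_of_real wr)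
    have c2: "bcnj (K2 w) = K2 w" using s2 w(1) True by (metis complex_cnj_complex_of_real wr)
    have "slicefun K1 (qof_real (Re w)) = slicefun K2 (qof_real (Re w))" using eq q by blast
    then have "Lq 0 (K1 w) = Lq 0 (K2 w)" by (simp add: slicefun_eq wr[symmetric])
    then have "bre (K1 w) = bre (K2 w)" using Lq_real_bcnj c1 c2 by simp
    then show ?thesis using bre_bim_eq Lq_real_bcnj(2)[OF c1] Lq_real_bcnj(2)[OF c2] by metis
  next
    case False
    then have y: "Im w > 0" using w(2) by simp
    have q1: "qof_real (Re w) + Im w *\<^sub>R qi \<in> U" using w(1) by (simp add: slice_dom_def)
    have q2: "qof_real (Re w) + Im w *\<^sub>R (- qi) \<in> U" using axsymD[OF U qi_S mqi_S q1] .
    have "slicefun K1 (qof_real (Re w) + Im w *\<^sub>R qi) = slicefun K2 (qof_real (Re w) + Im w *\<^sub>R qi)"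
      using eq q1 by blast
    then have e1: "Lq qi (K1 w) = Lq qi (K2 w)"
      unfolding slicefun_eq piz_xyJ[OF qi_S y] complex.collapse .
    have "slicefun K1 (qof_real (Re w) + Im w *\<^sub>R (-qi)) = slicefun K2 (qof_real (Re w) + Im w *\<^sub>R (-qi))"
      using eq q2 by blast
    then have e2: "Lq (-qi) (K1 w) = Lq (-qi) (K2 w)"
      unfolding slicefun_eq piz_xyJ[OF mqi_S y] complex.collapse .
    show ?thesis using Lq_pm_inj[OF qi_S e1 e2] .
  qed
  show ?thesis
  proof (cases "Im z \<ge> 0")
    case True then show ?thesis using up z by blast
  next
    case False
    have cz: "cnj z \<in> slice_dom U" using slice_dom_cnj[OF U z] .
    have "K1 (cnj z) = K2 (cnj z)" using up[OF cz] False by simp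
    moreover have "K1 z = bcnj (K1 (cnj z))" using s1 cz by (metis complex_cnj_cnj)
    moreover have "K2 z = bcnj (K2 (cnj z))" using s2 cz by (metis complex_cnj_cnj)
    ultimately show ?thesis by simp
  qed
qed


definition ssq :: "bquat \<Rightarrow> complex" where "ssq G = (c1 G)^2 + (c2 G)^2 + (c3 G)^2"

lemma bcnj_hmul: "bcnj (hmul P Q) = hmul (bcnj P) (bcnj Q)"
  by (cases P; cases Q) (simp add: bcnj_def hmul_def cdefs)
lemma bcnj_add: "bcnj (P + Q) = bcnj P + bcnj Q"
  by (cases P; cases Q) (simp add: bcnj_def cdefs)
lemma bcnj_zero: "bcnj 0 = 0"
  by (simp add: bcnj_def cdefs bquat_zero)
lemma bcnj_cmul: "bcnj (cmul a P) = cmul (cnj a) (bcnj P)"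
  by (cases P) (simp add: bcnj_def cmul_def cdefs)
lemma bcnj_scaleR: "bcnj (r *\<^sub>R P) = r *\<^sub>R bcnj P"
  by (cases P) (simp add: bcnj_def cdefs)
lemma bcnj_tuple: "bcnj (a,b,c,d) = (cnj a, cnj b, cnj c, cnj d)"
  by (simp add: bcnj_def cdefs)
lemma c_bcnj: "c0 (bcnj P) = cnj (c0 P)" "c1 (bcnj P) = cnj (c1 P)"
   "c2 (bcnj P) = cnj (c2 P)" "c3 (bcnj P) = cnj (c3 P)"
  by (simp_all add: bcnj_def cdefs)

lemma is_stem_holo: "is_stem U G f \<Longrightarrow> holo_stem (slice_dom U) G"
  by (simp add: is_stem_def)

lemma is_stem_cnj: "is_stem U G f \<Longrightarrow> z \<in> slice_dom U \<Longrightarrow> G (cnj z) = bcnj (G z)"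
  by (simp add: is_stem_def holo_stem_def)

lemma is_stem_at: "is_stem U G f \<Longrightarrow> axially_symmetric U \<Longrightarrow> q \<in> U \<Longrightarrow> f q = Lq (Jq q) (G (piz q))"
  by (simp add: is_stem_def slicefun_eq)

lemma stem_of_eq:
  assumes U: "axially_symmetric U" and G: "is_stem U G f"
  shows "is_stem U (stem_of U f) f" "z \<in> slice_dom U \<Longrightarrow> stem_of U f z = G z"
proof -
  show S: "is_stem U (stem_of U f) f" unfolding stem_of_def using someI[of "\<lambda>G. is_stem U G f" G] G by simp
  assume z: "z \<in> slice_dom U"
  show "stem_of U f z = G z"
  proof (rule stem_unique[OF U _ _ _ z])
    show "\<forall>z\<in>slice_dom U. stem_of U f (cnj z) = bcnj (stem_of U f z)" using S is_stem_cnj by blast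
    show "\<forall>z\<in>slice_dom U. G (cnj z) = bcnj (G z)" using G is_stem_cnj by blast
    show "\<forall>q\<in>U. slicefun (stem_of U f) q = slicefun G q" using S G by (simp add: is_stem_def)
  qed
qed

lemma slice_dom_mono: "U \<subseteq> \<Omega> \<Longrightarrow> slice_dom U \<subseteq> slice_dom \<Omega>"
  by (auto simp: slice_dom_def)

lemma holo_stem_mono: "holo_stem D G \<Longrightarrow> D' \<subseteq> D \<Longrightarrow> holo_stem D' G"
  unfolding holo_stem_def using holomorphic_on_subset by blast

lemma is_stem_mono: "is_stem \<Omega> G f \<Longrightarrow> U \<subseteq> \<Omega> \<Longrightarrow> is_stem U G f"
  unfolding is_stem_def using holo_stem_mono slice_dom_mono by blast

lemma slicefun_cong:
  assumes "axially_symmetric U" "q \<in> U" "\<forall>z\<in>slice_dom U. K1 z = K2 z"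
  shows "slicefun K1 q = slicefun K2 q"
  using assms piz_in by (simp add: slicefun_eq)

lemma star_eq:
  assumes U: "axially_symmetric U" and A: "is_stem U A a" and G: "is_stem U G g" and q: "q \<in> U"
  shows "star U a g q = Lq (Jq q) (hmul (A (piz q)) (G (piz q)))"
proof -
  have p: "piz q \<in> slice_dom U" using piz_in[OF U q] .
  show ?thesis unfolding star_def slicefun_eq
    using stem_of_eq(2)[OF U A p] stem_of_eq(2)[OF U G p] by simp
qed

lemma star_pow_eq:
  assumes U: "axially_symmetric U" and G: "is_stem U G f" and q: "q \<in> U"
  shows "star_pow U f n q = Lq (Jq q) (hpow (G (piz q)) n)"
proof -
  have p: "piz q \<in> slice_dom U" using piz_in[OF U q] .
  show ?thesis unfolding star_pow_def slicefun_eq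
    using stem_of_eq(2)[OF U G p] by simp
qed

definition vst :: "bquat \<Rightarrow> bquat" where "vst P = (0, c1 P, c2 P, c3 P)"

lemma holo_c:
  assumes "holo_stem D G"
  shows "(\<lambda>z. c0 (G z)) holomorphic_on D" "(\<lambda>z. c1 (G z)) holomorphic_on D"
        "(\<lambda>z. c2 (G z)) holomorphic_on D" "(\<lambda>z. c3 (G z)) holomorphic_on D"
  using assms by (simp_all add: holo_stem_def)

lemma vect_part_stem:
  assumes U: "axially_symmetric U" and G: "is_stem U G f"
  shows "is_stem U (\<lambda>z. vst (G z)) (vect_part U f)"
proof -
  have h: "holo_stem (slice_dom U) G" using G by (simp add: is_stem_def)
  have "holo_stem (slice_dom U) (\<lambda>z. vst (G z))"
    unfolding holo_stem_def vst_def
    using holo_c[OF h] is_stem_cnj[OF G] by (simp add: cdefs bcnj_def)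
  moreover have "\<forall>q\<in>U. vect_part U f q = slicefun (\<lambda>z. vst (G z)) q"
    unfolding vect_part_def vst_def
    by (intro ballI slicefun_cong[OF U]) (auto simp: stem_of_eq(2)[OF U G])
  ultimately show ?thesis by (simp add: is_stem_def)
qed

lemma symm_eq:
  assumes U: "axially_symmetric U" and G: "is_stem U G f" and q: "q \<in> U"
  shows "symmetrization U f q = slicefun (\<lambda>z. ((c0 (G z))^2 + ssq (G z), 0, 0, 0)) q"
  unfolding symmetrization_def ssq_def
  by (rule slicefun_cong[OF U q]) (simp add: stem_of_eq(2)[OF U G] add.assoc)


fun ab :: "bquat \<Rightarrow> nat \<Rightarrow> complex \<times> complex" where
  "ab G 0 = (1, 0)"
| "ab G (Suc n) = (c0 G * fst (ab G n) - ssq G * snd (ab G n), fst (ab G n) + c0 G * snd (ab G n))"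

lemma hpow_ab: "hpow G n = (fst (ab G n), snd (ab G n) * c1 G, snd (ab G n) * c2 G, snd (ab G n) * c3 G)"
proof (induction n)
  case 0 then show ?case by (simp add: hone_def)
next
  case (Suc n)
  obtain g0 g1 g2 g3 where G: "G = (g0,g1,g2,g3)" by (cases G) auto
  show ?case using Suc by (simp add: G hmul_def cdefs ssq_def algebra_simps power2_eq_square)
qed

lemma mu_aux:
  fixes a b g s m :: complex
  assumes "m^2 = - s"
  shows "g * a - s * b + m * (a + g * b) = (g + m) * (a + m * b)"
  using assms by algebra

lemma ab_mu:
  assumes "m^2 = - ssq G"
  shows "fst (ab G n) + m * snd (ab G n) = (c0 G + m)^n"
proof (induction n)
  case 0 then show ?case by simp
next
  case (Suc n)
  then show ?case using mu_aux[OF assms] by simp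
qed

lemma ab_bound:
  fixes G :: bquat
  defines "K \<equiv> 1 + norm (c0 G) + norm (ssq G)"
  shows "norm (fst (ab G n)) \<le> K^n \<and> norm (snd (ab G n)) \<le> K^n"
proof (induction n)
  case 0 then show ?case by simp
next
  case (Suc n)
  define a where "a = fst (ab G n)"
  define b where "b = snd (ab G n)"
  have a: "norm a \<le> K^n" and b: "norm b \<le> K^n" using Suc by (auto simp: a_def b_def)
  have K0: "K^n \<ge> 0" by (simp add: K_def)
  have "norm (c0 G * a - ssq G * b) \<le> norm (c0 G) * norm a + norm (ssq G) * norm b"
    by (metis norm_mult norm_triangle_ineq4)
  also have "\<dots> \<le> norm (c0 G) * K^n + norm (ssq G) * K^n"
    by (intro add_mono mult_left_mono a b) auto
  also have "\<dots> \<le> K * K^n" using K0 by (simp add: K_def algebra_simps)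
  finally have 1: "norm (c0 G * a - ssq G * b) \<le> K^Suc n" by simp
  have "norm (a + c0 G * b) \<le> norm a + norm (c0 G) * norm b"
    by (metis norm_mult norm_triangle_ineq)
  also have "\<dots> \<le> K^n + norm (c0 G) * K^n"
    by (intro add_mono mult_left_mono a b) auto
  also have "\<dots> \<le> K * K^n" using K0 by (simp add: K_def algebra_simps)
  finally have 2: "norm (a + c0 G * b) \<le> K^Suc n" by simp
  show ?case using 1 2 by (simp add: a_def b_def)
qed

lemma summable_ab:
  shows "summable (\<lambda>n. fst (ab G n) /\<^sub>R fact n)" "summable (\<lambda>n. snd (ab G n) /\<^sub>R fact n)"
proof -
  define K where "K = 1 + norm (c0 G) + norm (ssq G)"
  have s: "summable (\<lambda>n. K^n /\<^sub>R fact n)" by (rule summable_exp_generic)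
  show "summable (\<lambda>n. fst (ab G n) /\<^sub>R fact n)"
  proof (rule summable_comparison_test[OF _ s], intro exI allI impI)
    fix n
    show "norm (fst (ab G n) /\<^sub>R fact n) \<le> K^n /\<^sub>R fact n"
      using ab_bound[of G n] by (simp add: K_def divide_right_mono)
  qed
  show "summable (\<lambda>n. snd (ab G n) /\<^sub>R fact n)"
  proof (rule summable_comparison_test[OF _ s], intro exI allI impI)
    fix n
    show "norm (snd (ab G n) /\<^sub>R fact n) \<le> K^n /\<^sub>R fact n"
      using ab_bound[of G n] by (simp add: K_def divide_right_mono)
  qed
qed

definition AA :: "bquat \<Rightarrow> complex" where "AA G = (\<Sum>n. fst (ab G n) /\<^sub>R fact n)"
definition BB :: "bquat \<Rightarrow> complex" where "BB G = (\<Sum>n. snd (ab G n) /\<^sub>R fact n)"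

lemma AA_sums: "(\<lambda>n. fst (ab G n) /\<^sub>R fact n) sums AA G"
  unfolding AA_def using summable_ab(1) by (rule summable_sums)
lemma BB_sums: "(\<lambda>n. snd (ab G n) /\<^sub>R fact n) sums BB G"
  unfolding BB_def using summable_ab(2) by (rule summable_sums)

lemma AB_exp:
  assumes "m^2 = - ssq G"
  shows "AA G + m * BB G = exp (c0 G + m)"
proof -
  have "(\<lambda>n. fst (ab G n) /\<^sub>R fact n + m * (snd (ab G n) /\<^sub>R fact n)) sums (AA G + m * BB G)"
    by (intro sums_add sums_mult AA_sums BB_sums)
  moreover have "(\<lambda>n. fst (ab G n) /\<^sub>R fact n + m * (snd (ab G n) /\<^sub>R fact n)) = (\<lambda>n. (c0 G + m)^n /\<^sub>R fact n)"
  proof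
    fix n
    have "fst (ab G n) /\<^sub>R fact n + m * (snd (ab G n) /\<^sub>R fact n) = (fst (ab G n) + m * snd (ab G n)) /\<^sub>R fact n"
      by (simp add: scaleR_add_right)
    then show "fst (ab G n) /\<^sub>R fact n + m * (snd (ab G n) /\<^sub>R fact n) = (c0 G + m)^n /\<^sub>R fact n"
      using ab_mu[OF assms] by simp
  qed
  ultimately show ?thesis using exp_converges sums_unique2 by metis
qed

lemma Lq_ab:
  "Lq J (a, b*g1, b*g2, b*g3) = Re a *\<^sub>R Lq J (1,0,0,0) + Im a *\<^sub>R Lq J (\<i>,0,0,0)
     + Re b *\<^sub>R Lq J (0,g1,g2,g3) + Im b *\<^sub>R Lq J (0,\<i>*g1,\<i>*g2,\<i>*g3)"
proof -
  have "(a, b*g1, b*g2, b*g3) = Re a *\<^sub>R (1,0,0,0) + Im a *\<^sub>R (\<i>,0,0,0)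
     + Re b *\<^sub>R (0,g1,g2,g3) + Im b *\<^sub>R (0,\<i>*g1,\<i>*g2,\<i>*g3)"
    by (simp add: complex_eq_iff)
  then show ?thesis by (subst \<open>_ = _\<close>) (simp only: Lq_add Lq_scaleR)
qed

lemma exp_series:
  "(\<lambda>n. (1 / fact n) *\<^sub>R Lq J (hpow G n)) sums Lq J (AA G, BB G * c1 G, BB G * c2 G, BB G * c3 G)"
proof -
  define E1 where "E1 = Lq J (1,0,0,0)"
  define E2 where "E2 = Lq J (\<i>,0,0,0)"
  define E3 where "E3 = Lq J (0, c1 G, c2 G, c3 G)"
  define E4 where "E4 = Lq J (0,\<i>*c1 G,\<i>*c2 G,\<i>*c3 G)"
  have L: "\<And>a b. Lq J (a, b * c1 G, b * c2 G, b * c3 G) = Re a *\<^sub>R E1 + Im a *\<^sub>R E2 + Re b *\<^sub>R E3 + Im b *\<^sub>R E4"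
    unfolding E1_def E2_def E3_def E4_def by (rule Lq_ab)
  have "(\<lambda>n. Re (fst (ab G n) /\<^sub>R fact n) *\<^sub>R E1 + Im (fst (ab G n) /\<^sub>R fact n) *\<^sub>R E2
     + Re (snd (ab G n) /\<^sub>R fact n) *\<^sub>R E3 + Im (snd (ab G n) /\<^sub>R fact n) *\<^sub>R E4)
     sums (Re (AA G) *\<^sub>R E1 + Im (AA G) *\<^sub>R E2 + Re (BB G) *\<^sub>R E3 + Im (BB G) *\<^sub>R E4)"
    by (intro sums_add sums_scaleR_left sums_Re sums_Im AA_sums BB_sums)
  moreover have "(\<lambda>n. Re (fst (ab G n) /\<^sub>R fact n) *\<^sub>R E1 + Im (fst (ab G n) /\<^sub>R fact n) *\<^sub>R E2
     + Re (snd (ab G n) /\<^sub>R fact n) *\<^sub>R E3 + Im (snd (ab G n) /\<^sub>R fact n) *\<^sub>R E4)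
     = (\<lambda>n. (1 / fact n) *\<^sub>R Lq J (hpow G n))"
    by (rule ext) (simp only: hpow_ab L, simp add: scaleR_add_right inverse_eq_divide)
  ultimately show ?thesis by (simp add: L)
qed


definition Ptup :: "bquat \<Rightarrow> bquat" where
  "Ptup G = (AA G, BB G * c1 G, BB G * c2 G, BB G * c3 G)"

lemma Ptup_hone_iff: "Ptup G = hone \<longleftrightarrow> AA G = 1 \<and> BB G * c1 G = 0 \<and> BB G * c2 G = 0 \<and> BB G * c3 G = 0"
  by (simp add: Ptup_def hone_def)

lemma neg_S: "J \<in> \<SS> \<Longrightarrow> - J \<in> \<SS>"
  by (auto simp: imag_units_iff)

lemma P_hone_of:
  assumes g0: "c0 G = 0" and s: "ssq G = (complex_of_real (2 * of_int n * pi))^2"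
    and nz: "n \<noteq> 0 \<or> G = 0"
  shows "Ptup G = hone"
proof -
  define m where "m = \<i> * complex_of_real (2 * of_int n * pi)"
  have m2: "m^2 = - ssq G" by (simp add: m_def s power_mult_distrib)
  have mm2: "(-m)^2 = - ssq G" using m2 by simp
  have e1: "exp m = 1" unfolding exp_eq_1 by (simp add: m_def)
  have e2: "exp (-m) = 1" unfolding exp_eq_1 by (simp add: m_def) (rule exI[of _ "-n"], simp)
  have a1: "AA G + m * BB G = 1" using AB_exp[OF m2] e1 g0 by simp
  have a2: "AA G + (-m) * BB G = 1" using AB_exp[OF mm2] e2 g0 by simp
  have b1: "(AA G - 1) + m * BB G = 0" using a1 by (simp add: algebra_simps)
  have b2: "(AA G - 1) - m * BB G = 0" using a2 by (simp add: algebra_simps)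
  have A: "AA G = 1" using pm_zero(1)[OF b1 b2] by simp
  have mB: "m * BB G = 0" using a1 A by simp
  show ?thesis
  proof (cases "n = 0")
    case False
    then have "m \<noteq> 0" by (simp add: m_def)
    then have "BB G = 0" using mB by simp
    then show ?thesis using A by (simp add: Ptup_hone_iff)
  next
    case True
    then have "G = 0" using nz by simp
    then show ?thesis using A by (simp add: Ptup_hone_iff cdefs bquat_zero)
  qed
qed

lemma star_exp_one_of:
  assumes U: "axially_symmetric U" and F: "is_stem U F f"
    and P: "\<forall>q\<in>U. Ptup (F (piz q)) = hone"
  shows "star_exp_is_one U f"
  unfolding star_exp_is_one_def
proof
  fix q assume q: "q \<in> U"
  have "(\<lambda>n. (1 / fact n) *\<^sub>R star_pow U f n q) = (\<lambda>n. (1 / fact n) *\<^sub>R Lq (Jq q) (hpow (F (piz q)) n))"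
    using star_pow_eq[OF U F q] by simp
  moreover have "(\<lambda>n. (1 / fact n) *\<^sub>R Lq (Jq q) (hpow (F (piz q)) n)) sums hone"
    using exp_series[of "Jq q" "F (piz q)"] P q Lq_hone by (simp add: Ptup_def)
  ultimately show "(\<lambda>n. (1 / fact n) *\<^sub>R star_pow U f n q) sums hone" by simp
qed

lemma ab_real: "cnj (c0 G) = c0 G \<Longrightarrow> cnj (ssq G) = ssq G \<Longrightarrow>
   cnj (fst (ab G n)) = fst (ab G n) \<and> cnj (snd (ab G n)) = snd (ab G n)"
  by (induction n) simp_all

lemma Ptup_real:
  assumes "bcnj G = G" shows "bcnj (Ptup G) = Ptup G"
proof -
  have c: "cnj (c0 G) = c0 G" "cnj (c1 G) = c1 G" "cnj (c2 G) = c2 G" "cnj (c3 G) = c3 G"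
    using assms c_bcnj by metis+
  have s: "cnj (ssq G) = ssq G" using c by (simp add: ssq_def)
  have "(\<lambda>n. cnj (fst (ab G n) /\<^sub>R fact n)) = (\<lambda>n. fst (ab G n) /\<^sub>R fact n)"
    using ab_real[OF c(1) s] by simp
  then have a: "cnj (AA G) = AA G" using AA_sums sums_cnj sums_unique2 by metis
  have "(\<lambda>n. cnj (snd (ab G n) /\<^sub>R fact n)) = (\<lambda>n. snd (ab G n) /\<^sub>R fact n)"
    using ab_real[OF c(1) s] by simp
  then have b: "cnj (BB G) = BB G" using BB_sums sums_cnj sums_unique2 by metis
  show ?thesis using a b c by (simp add: Ptup_def bcnj_tuple)
qed

lemma star_exp_one_D:
  assumes U: "axially_symmetric U" and F: "is_stem U F f"
    and E: "star_exp_is_one U f" and q: "q \<in> U"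
  shows "Ptup (F (piz q)) = hone"
proof -
  define w where "w = piz q"
  have w: "w \<in> slice_dom U" using piz_in[OF U q] by (simp add: w_def)
  have L: "Lq (Jq p) (Ptup (F w)) = hone" if p: "p \<in> U" "piz p = w" for p
  proof -
    have s0: "(\<lambda>n. (1 / fact n) *\<^sub>R star_pow U f n p) sums hone" using E p by (simp add: star_exp_is_one_def)
    have e: "\<And>n. star_pow U f n p = Lq (Jq p) (hpow (F w) n)"
      using star_pow_eq[OF U F p(1)] p(2) by simp
    have s1: "(\<lambda>n. (1 / fact n) *\<^sub>R Lq (Jq p) (hpow (F w) n)) sums hone" using s0 by (simp only: e)
    have s2: "(\<lambda>n. (1 / fact n) *\<^sub>R Lq (Jq p) (hpow (F w) n)) sums Lq (Jq p) (Ptup (F w))"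
      unfolding Ptup_def by (rule exp_series)
    show ?thesis using sums_unique2[OF s2 s1] .
  qed
  show ?thesis
  proof (cases "qvec q = 0")
    case True
    define x where "x = c0 q"
    have qr: "q = qof_real x" using qvec_zero_real[OF True] by (simp add: x_def)
    have wr: "w = complex_of_real x" using qr by (simp add: w_def)
    have "F (cnj w) = bcnj (F w)" using is_stem_cnj[OF F w] .
    then have rc: "bcnj (F w) = F w" using wr by simp
    have rP: "bcnj (Ptup (F w)) = Ptup (F w)" using Ptup_real[OF rc] .
    have "Jq q = 0" using qr by simp
    then have "Lq 0 (Ptup (F w)) = hone" using L[OF q] w_def by simp
    then have "bre (Ptup (F w)) = hone" using Lq_real_bcnj(1)[OF rP] by simp
    then have "bre (Ptup (F w)) = bre hone" by (simp add: hone_def bre_def cdefs)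
    moreover have "bim (Ptup (F w)) = bim hone"
      using Lq_real_bcnj(2)[OF rP] by (simp add: hone_def bim_def cdefs quat_zero)
    ultimately show ?thesis using bre_bim_eq w_def by blast
  next
    case False
    define J where "J = Jq q"
    define y where "y = norm (qvec q)"
    have J: "J \<in> \<SS>" using Jq_unit[OF False] by (simp add: J_def)
    have y: "y > 0" using False by (simp add: y_def)
    define x where "x = c0 q"
    have qd: "q = qof_real x + y *\<^sub>R J" using q_decomp[of q] by (simp add: J_def y_def x_def)
    have q2: "qof_real x + y *\<^sub>R (-J) \<in> U"
      using axsymD[OF U J neg_S[OF J]] q qd by simp
    have p2: "piz (qof_real x + y *\<^sub>R (-J)) = w" "Jq (qof_real x + y *\<^sub>R (-J)) = -J"
      using piz_xyJ[OF neg_S[OF J] y] piz_xyJ[OF J y] qd w_def by simp_all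
    have l1: "Lq J (Ptup (F w)) = Lq J hone" using L[OF q] by (simp add: J_def w_def Lq_hone)
    have l2: "Lq (-J) (Ptup (F w)) = Lq (-J) hone" using L[OF q2 p2(1)] p2(2) by (simp add: Lq_hone)
    show ?thesis using Lq_pm_inj[OF J l1 l2] w_def by simp
  qed
qed


lemma exp_conds:
  assumes P: "Ptup G = hone" and m: "m^2 = - ssq G"
  shows "exp (c0 G + m) = 1" "exp (c0 G - m) = 1"
proof -
  have A: "AA G = 1" and B: "BB G * c1 G = 0" "BB G * c2 G = 0" "BB G * c3 G = 0"
    using P by (simp_all add: Ptup_hone_iff)
  have mm: "(-m)^2 = - ssq G" using m by simp
  have "exp (c0 G + m) = 1 \<and> exp (c0 G - m) = 1"
  proof (cases "BB G = 0")
    case True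
    then show ?thesis using AB_exp[OF m] AB_exp[OF mm] A by simp
  next
    case False
    then have "c1 G = 0" "c2 G = 0" "c3 G = 0" using B by auto
    then have "ssq G = 0" by (simp add: ssq_def)
    then have "m = 0" using m by simp
    then show ?thesis using AB_exp[OF m] A by simp
  qed
  then show "exp (c0 G + m) = 1" "exp (c0 G - m) = 1" by auto
qed

lemma g0_form:
  assumes P: "Ptup G = hone"
  shows "\<exists>k::int. c0 G = \<i> * complex_of_real (of_int k * pi)"
proof -
  define m where "m = csqrt (- ssq G)"
  have m: "m^2 = - ssq G" by (simp add: m_def)
  have "exp (c0 G + m) * exp (c0 G - m) = 1" using exp_conds[OF P m] by simp
  then have "exp (2 * c0 G) = 1" by (simp flip: exp_add)
  then obtain k :: int where "Re (2 * c0 G) = 0" "Im (2 * c0 G) = of_int (2 * k) * pi"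
    unfolding exp_eq_1 by blast
  then have "c0 G = \<i> * complex_of_real (of_int k * pi)" by (simp add: complex_eq_iff)
  then show ?thesis by blast
qed

lemma s_form:
  assumes P: "Ptup G = hone" and g0: "c0 G = 0"
  shows "\<exists>j::int. ssq G = (complex_of_real (2 * of_int j * pi))^2"
proof -
  define m where "m = csqrt (- ssq G)"
  have m: "m^2 = - ssq G" by (simp add: m_def)
  have "exp m = 1" using exp_conds(1)[OF P m] g0 by simp
  then obtain j :: int where "Re m = 0" "Im m = of_int (2 * j) * pi"
    unfolding exp_eq_1 by blast
  then have "m = \<i> * complex_of_real (2 * of_int j * pi)" by (simp add: complex_eq_iff)
  then have "ssq G = (complex_of_real (2 * of_int j * pi))^2" using m
    by (simp add: power_mult_distrib)
  then show ?thesis by blast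
qed

lemma BB_00:
  assumes "c0 G = 0" "ssq G = 0" shows "BB G = 1"
proof -
  have e: "snd (ab G n) /\<^sub>R fact n = (if n = 1 then 1 else 0)" for n
  proof -
    have z: "ab G (Suc (Suc k)) = (0,0)" for k by (induction k) (simp_all add: assms)
    show ?thesis
    proof (cases n)
      case 0 then show ?thesis by simp
    next
      case (Suc k)
      then show ?thesis
      proof (cases k)
        case 0 then show ?thesis using Suc assms by simp
      next
        case (Suc k')
        then show ?thesis using \<open>n = Suc k\<close> z[of k'] by simp
      qed
    qed
  qed
  have "(\<lambda>n. snd (ab G n) /\<^sub>R fact n) sums 1"
    unfolding e using sums_single[of 1 "\<lambda>_. (1::complex)"] by simp
  then show ?thesis using BB_sums sums_unique2 by blast
qed

lemma vec_zero:
  assumes P: "Ptup G = hone" and "c0 G = 0" "ssq G = 0" shows "G = 0"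
proof -
  have "BB G = 1" using BB_00 assms(2,3) .
  then have "c1 G = 0" "c2 G = 0" "c3 G = 0" using P by (simp_all add: Ptup_hone_iff)
  then show ?thesis using assms(2) by (cases G) (simp add: cdefs bquat_zero)
qed

lemma int_const:
  fixes \<phi> :: "'a::topological_space \<Rightarrow> complex"
  assumes S: "connected S" and c: "continuous_on S \<phi>" and I: "\<forall>x\<in>S. \<phi> x \<in> \<int>"
    and x: "x \<in> S" and y: "y \<in> S"
  shows "\<phi> x = \<phi> y"
proof -
  have "\<phi> constant_on S"
  proof (rule continuous_discrete_range_constant[OF S c])
    fix x assume x: "x \<in> S"
    show "\<exists>e>0. \<forall>y. y \<in> S \<and> \<phi> y \<noteq> \<phi> x \<longrightarrow> e \<le> norm (\<phi> y - \<phi> x)"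
    proof (intro exI[of _ 1] conjI allI impI)
      fix y assume y: "y \<in> S \<and> \<phi> y \<noteq> \<phi> x"
      obtain a where a: "\<phi> x = of_int a" using I x Ints_cases by metis
      obtain b where b: "\<phi> y = of_int b" using I y Ints_cases by metis
      have "a \<noteq> b" using y a b by auto
      then have "1 \<le> \<bar>b - a\<bar>" by simp
      then show "1 \<le> norm (\<phi> y - \<phi> x)" using a b
        by (metis norm_of_int of_int_abs of_int_diff of_int_1_le_iff)
    qed simp
  qed
  then show ?thesis using x y by (auto simp: constant_on_def)
qed


lemma cont_piz: "continuous_on S piz"
  unfolding piz_def Complex_eq qvec_def cdefs by (intro continuous_intros)

lemma cont_iota: "continuous_on S iota"
  unfolding iota_def qof_real_def qi_def by (intro continuous_intros)

lemma open_slice_dom: "open U \<Longrightarrow> open (slice_dom U)"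
proof -
  assume U: "open U"
  have "slice_dom U = UNIV \<inter> iota -` U" by (auto simp: slice_dom_iff)
  then show ?thesis using continuous_open_preimage[OF cont_iota open_UNIV U] by simp
qed

lemma vst_bcnj: "vst (bcnj P) = bcnj (vst P)"
  by (simp add: vst_def bcnj_def cdefs)

lemma hmul_scal: "hmul (a,0,0,0) (P::bquat) = (a * c0 P, a * c1 P, a * c2 P, a * c3 P)"
  by (cases P) (simp add: hmul_def cdefs)

lemma sp_stem:
  assumes "slice_preserving U \<alpha>"
  obtains A where "is_stem U A \<alpha>" "\<forall>z\<in>slice_dom U. A z = (c0 (A z), 0, 0, 0)"
proof -
  obtain A where A: "is_stem U A \<alpha>" "\<forall>z\<in>slice_dom U. c1 (A z) = 0 \<and> c2 (A z) = 0 \<and> c3 (A z) = 0"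
    using assms by (auto simp: slice_preserving_def)
  have "\<forall>z\<in>slice_dom U. A z = (c0 (A z), 0, 0, 0)"
  proof
    fix z assume "z \<in> slice_dom U"
    then have "c1 (A z) = 0 \<and> c2 (A z) = 0 \<and> c3 (A z) = 0" using A(2) by blast
    then show "A z = (c0 (A z), 0, 0, 0)" by (cases "A z") (simp add: cdefs)
  qed
  then show ?thesis using that A(1) by blast
qed

lemma cross_zero:
  assumes \<Omega>: "axially_symmetric \<Omega>" and F: "is_stem \<Omega> F f" and Gs: "is_stem \<Omega> Gs gv"
    and LD: "locally_dependent \<Omega> (vect_part \<Omega> f) gv" and p: "p \<in> \<Omega>"
  shows "c2 (F (piz p)) * c3 (Gs (piz p)) - c3 (F (piz p)) * c2 (Gs (piz p)) = 0"
    "c3 (F (piz p)) * c1 (Gs (piz p)) - c1 (F (piz p)) * c3 (Gs (piz p)) = 0"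
    "c1 (F (piz p)) * c2 (Gs (piz p)) - c2 (F (piz p)) * c1 (Gs (piz p)) = 0"
proof -
  have "\<exists>U. p \<in> U \<and> U \<subseteq> \<Omega> \<and> open U \<and> connected U \<and>
      axially_symmetric U \<and>
      (\<exists>\<alpha> \<beta>. slice_preserving U \<alpha> \<and> slice_preserving U \<beta> \<and>
         (\<exists>q\<in>U. \<alpha> q \<noteq> 0 \<or> \<beta> q \<noteq> 0) \<and>
         (\<forall>q\<in>U. star U \<alpha> (vect_part \<Omega> f) q + star U \<beta> gv q = 0))"
    using bspec[OF LD[unfolded locally_dependent_def] p] .
  then obtain U where HU: "p \<in> U \<and> U \<subseteq> \<Omega> \<and> open U \<and> connected U \<and>
      axially_symmetric U \<and>
      (\<exists>\<alpha> \<beta>. slice_preserving U \<alpha> \<and> slice_preserving U \<beta> \<and>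
         (\<exists>q\<in>U. \<alpha> q \<noteq> 0 \<or> \<beta> q \<noteq> 0) \<and>
         (\<forall>q\<in>U. star U \<alpha> (vect_part \<Omega> f) q + star U \<beta> gv q = 0))" ..
  have pU: "p \<in> U" and UO: "U \<subseteq> \<Omega>" and oU: "open U" and cU: "connected U"
    and aU: "axially_symmetric U" using HU by simp_all
  have ex2: "\<exists>\<alpha> \<beta>. slice_preserving U \<alpha> \<and> slice_preserving U \<beta> \<and>
         (\<exists>q\<in>U. \<alpha> q \<noteq> 0 \<or> \<beta> q \<noteq> 0) \<and>
         (\<forall>q\<in>U. star U \<alpha> (vect_part \<Omega> f) q + star U \<beta> gv q = 0)"
    using HU by (elim conjE)
  from ex2 obtain \<alpha> \<beta> where sa: "slice_preserving U \<alpha>" and sb: "slice_preserving U \<beta>"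
    and nz: "\<exists>q\<in>U. \<alpha> q \<noteq> 0 \<or> \<beta> q \<noteq> 0"
    and rel: "\<forall>q\<in>U. star U \<alpha> (vect_part \<Omega> f) q + star U \<beta> gv q = 0"
    by blast
  obtain A where A: "is_stem U A \<alpha>" "\<forall>z\<in>slice_dom U. A z = (c0 (A z), 0, 0, 0)"
    using sp_stem[OF sa] by blast
  obtain B where B: "is_stem U B \<beta>" "\<forall>z\<in>slice_dom U. B z = (c0 (B z), 0, 0, 0)"
    using sp_stem[OF sb] by blast
  have V: "is_stem U (\<lambda>z. vst (F z)) (vect_part \<Omega> f)"
    using is_stem_mono[OF vect_part_stem[OF \<Omega> F] UO] .
  have GU: "is_stem U Gs gv" using is_stem_mono[OF Gs UO] .
  define K where "K z = hmul (A z) (vst (F z)) + hmul (B z) (Gs z)" for z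
  have sdU: "slice_dom U \<subseteq> slice_dom \<Omega>" using slice_dom_mono[OF UO] .
  have K0: "K z = 0" if z: "z \<in> slice_dom U" for z
  proof (rule stem_unique[OF aU _ _ _ z])
    show "\<forall>z\<in>slice_dom U. K (cnj z) = bcnj (K z)"
    proof
      fix z assume z: "z \<in> slice_dom U"
      have zO: "z \<in> slice_dom \<Omega>" using z sdU by blast
      show "K (cnj z) = bcnj (K z)"
        unfolding K_def is_stem_cnj[OF A(1) z] is_stem_cnj[OF B(1) z] is_stem_cnj[OF F zO]
          is_stem_cnj[OF Gs zO] by (simp only: bcnj_add bcnj_hmul vst_bcnj)
    qed
    show "\<forall>z\<in>slice_dom U. (\<lambda>_. 0::bquat) (cnj z) = bcnj ((\<lambda>_. 0) z)" by (simp add: bcnj_zero)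
    show "\<forall>q\<in>U. slicefun K q = slicefun (\<lambda>_. 0) q"
    proof
      fix q assume q: "q \<in> U"
      have "star U \<alpha> (vect_part \<Omega> f) q + star U \<beta> gv q = 0" using rel q by blast
      then show "slicefun K q = slicefun (\<lambda>_. 0) q"
        unfolding star_eq[OF aU A(1) V q] star_eq[OF aU B(1) GU q]
        by (simp only: slicefun_eq K_def Lq_add Lq_zero)
    qed
  qed
  define a where "a z = c0 (A z)" for z
  define b where "b z = c0 (B z)" for z
  define v1 where "v1 z = c1 (F z)" for z
  define v2 where "v2 z = c2 (F z)" for z
  define v3 where "v3 z = c3 (F z)" for z
  define g1 where "g1 z = c1 (Gs z)" for z
  define g2 where "g2 z = c2 (Gs z)" for z
  define g3 where "g3 z = c3 (Gs z)" for z
  have Az: "A z = (a z, 0, 0, 0)" if z: "z \<in> slice_dom U" for z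
    using bspec[OF A(2) z] unfolding a_def .
  have Bz: "B z = (b z, 0, 0, 0)" if z: "z \<in> slice_dom U" for z
    using bspec[OF B(2) z] unfolding b_def .
  have lin: "a z * v1 z + b z * g1 z = 0 \<and> a z * v2 z + b z * g2 z = 0 \<and> a z * v3 z + b z * g3 z = 0"
    if z: "z \<in> slice_dom U" for z
  proof -
    have "K z = 0" using K0[OF z] .
    moreover have "K z = hmul (a z, 0, 0, 0) (vst (F z)) + hmul (b z, 0, 0, 0) (Gs z)"
      using Az[OF z] Bz[OF z] by (simp add: K_def)
    ultimately show ?thesis
      by (simp add: hmul_scal vst_def cdefs v1_def v2_def v3_def g1_def g2_def g3_def bquat_zero)
  qed
  define W where "W = slice_dom U \<inter> (\<lambda>z. (a z, b z)) -` (- {(0,0)})"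
  have hA: "holo_stem (slice_dom U) A" using A(1) by (simp add: is_stem_def)
  have hB: "holo_stem (slice_dom U) B" using B(1) by (simp add: is_stem_def)
  have hF: "holo_stem (slice_dom U) F" using is_stem_holo[OF F] holo_stem_mono sdU by blast
  have hG: "holo_stem (slice_dom U) Gs" using is_stem_holo[OF Gs] holo_stem_mono sdU by blast
  have ha: "a holomorphic_on slice_dom U" using holo_c[OF hA] by (simp add: a_def[abs_def])
  have hb: "b holomorphic_on slice_dom U" using holo_c[OF hB] by (simp add: b_def[abs_def])
  have hv: "v1 holomorphic_on slice_dom U" "v2 holomorphic_on slice_dom U" "v3 holomorphic_on slice_dom U"
    using holo_c[OF hF] by (simp_all add: v1_def[abs_def] v2_def[abs_def] v3_def[abs_def])
  have hg: "g1 holomorphic_on slice_dom U" "g2 holomorphic_on slice_dom U" "g3 holomorphic_on slice_dom U"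
    using holo_c[OF hG] by (simp_all add: g1_def[abs_def] g2_def[abs_def] g3_def[abs_def])
  have osd: "open (slice_dom U)" using open_slice_dom[OF oU] .
  have oW: "open W" unfolding W_def
  proof (rule continuous_open_preimage[OF _ osd])
    show "continuous_on (slice_dom U) (\<lambda>z. (a z, b z))"
      using holomorphic_on_imp_continuous_on[OF ha] holomorphic_on_imp_continuous_on[OF hb]
      by (intro continuous_intros)
    show "open (- {(0::complex, 0::complex)})" by auto
  qed
  have Wz: "a z \<noteq> 0 \<or> b z \<noteq> 0" if "z \<in> W" for z using that by (auto simp: W_def)
  have WU: "W \<subseteq> slice_dom U" by (auto simp: W_def)
  define C where "C = connected_component_set (slice_dom U) (piz p)"
  have pC: "piz p \<in> C" using piz_in[OF aU pU] by (simp add: C_def)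
  have oC: "open C" using open_connected_component[OF osd] by (simp add: C_def)
  have cC: "connected C" by (simp add: C_def)
  have CU: "C \<subseteq> slice_dom U" by (simp add: C_def connected_component_subset)
  have imC: "piz ` U \<subseteq> C" unfolding C_def
    by (rule connected_component_maximal) (use pU piz_in[OF aU] connected_continuous_image[OF cont_piz cU] in auto)
  obtain q1 where q1: "q1 \<in> U" "\<alpha> q1 \<noteq> 0 \<or> \<beta> q1 \<noteq> 0" using nz by blast
  have w1: "piz q1 \<in> W"
  proof -
    have zz: "piz q1 \<in> slice_dom U" using piz_in[OF aU q1(1)] .
    have "a (piz q1) \<noteq> 0 \<or> b (piz q1) \<noteq> 0"
    proof (rule ccontr)
      assume "\<not> (a (piz q1) \<noteq> 0 \<or> b (piz q1) \<noteq> 0)"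
      then have "A (piz q1) = 0" "B (piz q1) = 0" using Az[OF zz] Bz[OF zz]
        by (simp_all add: bquat_zero)
      then have "\<alpha> q1 = 0" "\<beta> q1 = 0" using is_stem_at[OF A(1) aU q1(1)] is_stem_at[OF B(1) aU q1(1)]
        by simp_all
      then show False using q1(2) by simp
    qed
    then show ?thesis using zz by (auto simp: W_def)
  qed
  have WCne: "W \<inter> C \<noteq> {}" using w1 imC q1(1) by blast
  have X: "x z = 0" if hx: "x holomorphic_on slice_dom U" and xW: "\<And>z. z \<in> W \<Longrightarrow> x z = 0"
    and zC: "z \<in> C" for x z
  proof -
    have "x z = (\<lambda>_. 0) z"
    proof (rule analytic_continuation_open[of "W \<inter> C" C x "\<lambda>_. 0"])
      show "open (W \<inter> C)" using oW oC by blast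
      show "x holomorphic_on C" using holomorphic_on_subset[OF hx CU] .
    qed (use oC WCne cC xW zC in auto)
    then show ?thesis by simp
  qed
  have cr: "v2 z * g3 z - v3 z * g2 z = 0 \<and> v3 z * g1 z - v1 z * g3 z = 0 \<and> v1 z * g2 z - v2 z * g1 z = 0"
    if zW: "z \<in> W" for z
  proof -
    have l: "a z * v1 z + b z * g1 z = 0" "a z * v2 z + b z * g2 z = 0" "a z * v3 z + b z * g3 z = 0"
      using lin WU zW by blast+
    show ?thesis
    proof (cases "a z = 0")
      case False
      have e1: "v1 z = - b z * g1 z / a z" "v2 z = - b z * g2 z / a z" "v3 z = - b z * g3 z / a z"
        using l False by (simp_all add: eq_neg_iff_add_eq_0 field_simps)
      show ?thesis unfolding e1 using False by (simp add: field_simps)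
    next
      case True
      then have bz: "b z \<noteq> 0" using Wz[OF zW] by simp
      have e1: "g1 z = - a z * v1 z / b z" "g2 z = - a z * v2 z / b z" "g3 z = - a z * v3 z / b z"
        using l bz by (simp_all add: eq_neg_iff_add_eq_0 field_simps)
      show ?thesis unfolding e1 using bz by (simp add: field_simps)
    qed
  qed
  have "(\<lambda>z. v2 z * g3 z - v3 z * g2 z) (piz p) = 0"
    by (rule X[OF _ _ pC]) (use hv hg cr in \<open>auto intro!: holomorphic_intros\<close>)
  moreover have "(\<lambda>z. v3 z * g1 z - v1 z * g3 z) (piz p) = 0"
    by (rule X[OF _ _ pC]) (use hv hg cr in \<open>auto intro!: holomorphic_intros\<close>)
  moreover have "(\<lambda>z. v1 z * g2 z - v2 z * g1 z) (piz p) = 0"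
    by (rule X[OF _ _ pC]) (use hv hg cr in \<open>auto intro!: holomorphic_intros\<close>)
  ultimately show "c2 (F (piz p)) * c3 (Gs (piz p)) - c3 (F (piz p)) * c2 (Gs (piz p)) = 0"
    "c3 (F (piz p)) * c1 (Gs (piz p)) - c1 (F (piz p)) * c3 (Gs (piz p)) = 0"
    "c1 (F (piz p)) * c2 (Gs (piz p)) - c2 (F (piz p)) * c1 (Gs (piz p)) = 0"
    by (simp_all add: v1_def v2_def v3_def g1_def g2_def g3_def)
qed


lemma lagrange3:
  fixes a b c x y z :: real
  shows "(b*z - c*y)^2 + (c*x - a*z)^2 + (a*y - b*x)^2 = (a^2+b^2+c^2)*(x^2+y^2+z^2) - (a*x + b*y + c*z)^2"
  by algebra

lemma ssq_eq: "ssq (0, r1 + \<i> * i1, r2 + \<i> * i2, r3 + \<i> * i3) =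
   complex_of_real ((r1^2+r2^2+r3^2) - (i1^2+i2^2+i3^2)) + \<i> * complex_of_real (2 * (r1*i1 + r2*i2 + r3*i3))"
  by (simp add: ssq_def cdefs complex_eq_iff power2_eq_square algebra_simps)

lemma Lq_vec: "Lq (0,j1,j2,j3) (0, r1 + \<i> * i1, r2 + \<i> * i2, r3 + \<i> * i3) =
   (- (j1*i1 + j2*i2 + j3*i3), r1 + (j2*i3 - j3*i2), r2 + (j3*i1 - j1*i3), r3 + (j1*i2 - j2*i1))"
  by (simp add: Lq_def bre_def bim_def cdefs hmul_def algebra_simps)

lemma iso_from_zero:
  fixes j1 j2 j3 r1 r2 r3 i1 i2 i3 :: real
  assumes u: "j1^2+j2^2+j3^2 = 1"
    and z: "Lq (0,j1,j2,j3) (0, r1 + \<i> * i1, r2 + \<i> * i2, r3 + \<i> * i3) = 0"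
  shows "r1^2+r2^2+r3^2 = i1^2+i2^2+i3^2" "r1*i1 + r2*i2 + r3*i3 = 0"
proof -
  have e: "j1*i1 + j2*i2 + j3*i3 = 0" "r1 = - (j2*i3 - j3*i2)" "r2 = - (j3*i1 - j1*i3)" "r3 = - (j1*i2 - j2*i1)"
    using z unfolding Lq_vec by (simp_all add: quat_zero eq_neg_iff_add_eq_0)
  show "r1^2+r2^2+r3^2 = i1^2+i2^2+i3^2"
  proof -
    have "r1^2+r2^2+r3^2 = (j2*i3 - j3*i2)^2 + (j3*i1 - j1*i3)^2 + (j1*i2 - j2*i1)^2"
      unfolding e(2-4) by (simp add: power2_eq_square algebra_simps)
    also have "\<dots> = (j1^2+j2^2+j3^2)*(i1^2+i2^2+i3^2) - (j1*i1 + j2*i2 + j3*i3)^2"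
      by (rule lagrange3[where a=j1 and b=j2 and c=j3 and x=i1 and y=i2 and z=i3])
    finally show ?thesis using u e(1) by simp
  qed
  show "r1*i1 + r2*i2 + r3*i3 = 0" unfolding e(2-4) by (simp add: algebra_simps)
qed

lemma zero_from_iso:
  fixes n r1 r2 r3 i1 i2 i3 :: real
  assumes rn: "r1^2+r2^2+r3^2 = n" and inn: "i1^2+i2^2+i3^2 = n" and n: "n > 0"
    and ri: "r1*i1 + r2*i2 + r3*i3 = 0"
  defines "j1 \<equiv> (r2*i3 - r3*i2)/n" and "j2 \<equiv> (r3*i1 - r1*i3)/n" and "j3 \<equiv> (r1*i2 - r2*i1)/n"
  shows "j1^2+j2^2+j3^2 = 1" "Lq (0,j1,j2,j3) (0, r1 + \<i> * i1, r2 + \<i> * i2, r3 + \<i> * i3) = 0"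
proof -
  have "(r2*i3 - r3*i2)^2 + (r3*i1 - r1*i3)^2 + (r1*i2 - r2*i1)^2 = n * n"
    using lagrange3[where a=r1 and b=r2 and c=r3 and x=i1 and y=i2 and z=i3] rn inn ri by simp
  then show "j1^2+j2^2+j3^2 = 1" using n
    by (simp add: j1_def j2_def j3_def power_divide add_divide_distrib[symmetric] power2_eq_square)
  have d: "j1*i1 + j2*i2 + j3*i3 = 0"
    unfolding j1_def j2_def j3_def using n by (simp add: field_simps)
  have x1: "n * (j2*i3 - j3*i2) = i1 * (r1*i1 + r2*i2 + r3*i3) - r1 * (i1^2+i2^2+i3^2)"
    unfolding j1_def j2_def j3_def using n by (simp add: field_simps power2_eq_square)
  have x2: "n * (j3*i1 - j1*i3) = i2 * (r1*i1 + r2*i2 + r3*i3) - r2 * (i1^2+i2^2+i3^2)"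
    unfolding j1_def j2_def j3_def using n by (simp add: field_simps power2_eq_square)
  have x3: "n * (j1*i2 - j2*i1) = i3 * (r1*i1 + r2*i2 + r3*i3) - r3 * (i1^2+i2^2+i3^2)"
    unfolding j1_def j2_def j3_def using n by (simp add: field_simps power2_eq_square)
  have "n * (j2*i3 - j3*i2) = n * (- r1)" using x1 ri inn by simp
  then have y1: "j2*i3 - j3*i2 = - r1" using n by (metis less_irrefl mult_left_cancel)
  have "n * (j3*i1 - j1*i3) = n * (- r2)" using x2 ri inn by simp
  then have y2: "j3*i1 - j1*i3 = - r2" using n by (metis less_irrefl mult_left_cancel)
  have "n * (j1*i2 - j2*i1) = n * (- r3)" using x3 ri inn by simp
  then have y3: "j1*i2 - j2*i1 = - r3" using n by (metis less_irrefl mult_left_cancel)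
  show "Lq (0,j1,j2,j3) (0, r1 + \<i> * i1, r2 + \<i> * i2, r3 + \<i> * i3) = 0"
    unfolding Lq_vec using d y1 y2 y3 by (simp add: quat_zero)
qed

lemma vec_decomp: "c0 P = 0 \<Longrightarrow> P = (0, complex_of_real (Re (c1 P)) + \<i> * complex_of_real (Im (c1 P)),
   complex_of_real (Re (c2 P)) + \<i> * complex_of_real (Im (c2 P)), complex_of_real (Re (c3 P)) + \<i> * complex_of_real (Im (c3 P)))"
  by (cases P) (simp add: cdefs complex_eq_iff)

lemma Lq_scal: "Lq (0,b,c,d) (x,0,0,0) = (Re x, b * Im x, c * Im x, d * Im x)"
  by (simp add: Lq_def bre_def bim_def cdefs hmul_def)

lemma qinv_Lq:
  assumes J: "J \<in> \<SS> \<or> (J = 0 \<and> Im H = 0)" and H: "H \<noteq> 0"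
  shows "Lq J (inverse H, 0, 0, 0) = qinv (Lq J (H, 0, 0, 0))"
proof (cases "J = 0")
  case True
  then have iH: "Im H = 0" using J by (auto simp: imag_units_iff quat_zero)
  then have "Re H \<noteq> 0" using H by (simp add: complex_eq_iff)
  then show ?thesis using True iH
    by (simp add: Lq_def bre_def bim_def cdefs qinv_def qconj_def norm_quat power2_eq_square
         Re_divide Im_divide inverse_eq_divide)
next
  case False
  then obtain b c d where Jd: "J = (0,b,c,d)" and u: "b^2+c^2+d^2 = 1" using J imag_units_iff by auto
  have nn: "(Re H)^2 + (Im H)^2 \<noteq> 0" using H by (simp add: complex_eq_iff add_nonneg_eq_0_iff)
  have n2: "(norm (Re H, b * Im H, c * Im H, d * Im H))^2 = (Re H)^2 + (Im H)^2"
  proof -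
    have "(norm (Re H, b * Im H, c * Im H, d * Im H))^2 = (Re H)^2 + (b^2+c^2+d^2) * (Im H)^2"
      by (simp add: norm_quat cdefs power_mult_distrib algebra_simps)
    then show ?thesis using u by simp
  qed
  show ?thesis unfolding Jd Lq_scal qinv_def n2 using nn
    by (simp add: qconj_def cdefs Re_divide Im_divide inverse_eq_divide power2_eq_square)
qed

lemma cmul_scale: "cmul (complex_of_real c / H) X = c *\<^sub>R cmul (inverse H) X"
  by (cases X) (simp add: cmul_def cdefs scaleR_conv_of_real divide_inverse)

lemma formula:
  assumes J: "J \<in> \<SS> \<or> (J = 0 \<and> Im H = 0)" and H: "H \<noteq> 0"
  shows "Lq J (cmul (complex_of_real c / H) X) = c *\<^sub>R hmul (qinv (Lq J (H, 0, 0, 0))) (Lq J X)"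
proof -
  have "Lq J (cmul (inverse H) X) = hmul (Lq J (inverse H, 0, 0, 0)) (Lq J X)"
  proof (cases "J \<in> \<SS>")
    case True then show ?thesis by (rule Lq_cmul)
  next
    case False
    then have "J = 0" "Im (inverse H) = 0" using J by (auto simp: Im_divide inverse_eq_divide)
    then show ?thesis using Lq_cmul0 by simp
  qed
  then show ?thesis unfolding cmul_scale Lq_scaleR qinv_Lq[OF J H] by simp
qed


context
  fixes \<Omega> :: "quat set" and gv h :: "quat \<Rightarrow> quat"
  assumes ax: "axially_symmetric \<Omega>" and sd: "slice_domain \<Omega>"
    and mr: "minimal_representative \<Omega> gv"
    and hp: "slice_preserving \<Omega> h"
    and hh: "\<forall>q\<in>\<Omega>. star \<Omega> h h q = symmetrization \<Omega> gv q"
begin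

definition "Gs = stem_of \<Omega> gv"
definition "Hs = stem_of \<Omega> h"
definition "HH z = c0 (Hs z)"

lemma Gs_stem: "is_stem \<Omega> Gs gv" and Gs0: "z \<in> slice_dom \<Omega> \<Longrightarrow> c0 (Gs z) = 0"
proof -
  obtain G where G: "is_stem \<Omega> G gv" "\<forall>z\<in>slice_dom \<Omega>. c0 (G z) = 0"
    using mr by (auto simp: minimal_representative_def vectorial_def)
  show "is_stem \<Omega> Gs gv" unfolding Gs_def using stem_of_eq(1)[OF ax G(1)] .
  assume z: "z \<in> slice_dom \<Omega>"
  show "c0 (Gs z) = 0" unfolding Gs_def using stem_of_eq(2)[OF ax G(1) z] G(2) z by simp
qed

lemma Hs_stem: "is_stem \<Omega> Hs h" and Hs_eq: "z \<in> slice_dom \<Omega> \<Longrightarrow> Hs z = (HH z, 0, 0, 0)"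
proof -
  obtain A where A: "is_stem \<Omega> A h" "\<forall>z\<in>slice_dom \<Omega>. A z = (c0 (A z), 0, 0, 0)"
    using sp_stem[OF hp] by blast
  show "is_stem \<Omega> Hs h" unfolding Hs_def using stem_of_eq(1)[OF ax A(1)] .
  assume z: "z \<in> slice_dom \<Omega>"
  have "Hs z = A z" unfolding Hs_def using stem_of_eq(2)[OF ax A(1) z] .
  then show "Hs z = (HH z, 0, 0, 0)" using bspec[OF A(2) z] by (simp add: HH_def)
qed

lemma ssq_bcnj: "ssq (bcnj P) = cnj (ssq P)"
  by (simp add: ssq_def c_bcnj)

lemma HH_sq: "z \<in> slice_dom \<Omega> \<Longrightarrow> (HH z)^2 = ssq (Gs z)"
proof -
  assume z: "z \<in> slice_dom \<Omega>"
  have "hmul (Hs z) (Hs z) = ((c0 (Gs z))^2 + ssq (Gs z), 0, 0, 0)"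
  proof (rule stem_unique[OF ax _ _ _ z])
    show "\<forall>z\<in>slice_dom \<Omega>. hmul (Hs (cnj z)) (Hs (cnj z)) = bcnj (hmul (Hs z) (Hs z))"
      using is_stem_cnj[OF Hs_stem] by (simp add: bcnj_hmul)
    show "\<forall>z\<in>slice_dom \<Omega>. (\<lambda>z. ((c0 (Gs z))^2 + ssq (Gs z), 0::complex, 0::complex, 0::complex)) (cnj z) =
       bcnj ((\<lambda>z. ((c0 (Gs z))^2 + ssq (Gs z), 0, 0, 0)) z)"
      using is_stem_cnj[OF Gs_stem] by (simp add: bcnj_tuple ssq_bcnj c_bcnj)
    show "\<forall>q\<in>\<Omega>. slicefun (\<lambda>z. hmul (Hs z) (Hs z)) q = slicefun (\<lambda>z. ((c0 (Gs z))\<^sup>2 + ssq (Gs z), 0, 0, 0)) q"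
    proof
      fix q assume q: "q \<in> \<Omega>"
      have "star \<Omega> h h q = symmetrization \<Omega> gv q" using hh q by blast
      then show "slicefun (\<lambda>z. hmul (Hs z) (Hs z)) q = slicefun (\<lambda>z. ((c0 (Gs z))\<^sup>2 + ssq (Gs z), 0, 0, 0)) q"
        unfolding star_eq[OF ax Hs_stem Hs_stem q] symm_eq[OF ax Gs_stem q] by (simp add: slicefun_eq)
    qed
  qed
  then show ?thesis using Hs_eq[OF z] Gs0[OF z] by (simp add: hmul_scal cdefs power2_eq_square)
qed

lemma open_O: "open \<Omega>" and conn_O: "connected \<Omega>" and realpt: "\<exists>x. qof_real x \<in> \<Omega>"
  using sd by (auto simp: slice_domain_def)

lemma pizO: "q \<in> \<Omega> \<Longrightarrow> piz q \<in> slice_dom \<Omega>" using piz_in[OF ax] .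

lemma Gs_real: "x \<in> slice_dom \<Omega> \<Longrightarrow> Im x = 0 \<Longrightarrow> bcnj (Gs x) = Gs x"
proof -
  assume x: "x \<in> slice_dom \<Omega>" "Im x = 0"
  then have "cnj x = x" by (simp add: complex_eq_iff)
  then show ?thesis using is_stem_cnj[OF Gs_stem x(1)] by simp
qed

lemma Gs_nz: "q \<in> \<Omega> \<Longrightarrow> Gs (piz q) \<noteq> 0"
proof -
  assume q: "q \<in> \<Omega>"
  define x where "x = c0 q"
  define y where "y = norm (qvec q)"
  have wxy: "piz q = Complex x y" by (simp add: piz_def x_def y_def)
  show ?thesis
  proof (cases "qvec q = 0")
    case True
    have qr: "q = qof_real x" using qvec_zero_real[OF True] by (simp add: x_def)
    have "gv q \<noteq> 0" using mr q qr by (simp add: minimal_representative_def)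
    then show ?thesis using is_stem_at[OF Gs_stem ax q] by auto
  next
    case False
    have y: "y > 0" using False by (simp add: y_def)
    have qd: "q = qof_real x + y *\<^sub>R Jq q" using q_decomp[of q] by (simp add: x_def y_def)
    have "qof_real x + y *\<^sub>R qi \<in> \<Omega>" using axsymD[OF ax Jq_unit[OF False] qi_S] q qd by simp
    moreover have "y \<noteq> 0" using y by simp
    ultimately have "\<exists>J\<in>\<SS>. gv (qof_real x + y *\<^sub>R J) \<noteq> 0"
      using mr unfolding minimal_representative_def by blast
    then obtain J where J: "J \<in> \<SS>" "gv (qof_real x + y *\<^sub>R J) \<noteq> 0" by blast
    have "qof_real x + y *\<^sub>R J \<in> \<Omega>" using axsymD[OF ax Jq_unit[OF False] J(1)] q qd by simp
    then have "gv (qof_real x + y *\<^sub>R J) = Lq J (Gs (piz q))"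
      using is_stem_at[OF Gs_stem ax] piz_xyJ[OF J(1) y] wxy by simp
    then show ?thesis using J(2) by auto
  qed
qed

lemma zero_ssq:
  assumes q: "q \<in> \<Omega>" and z: "gv q = 0"
  shows "ssq (Gs (piz q)) = 0"
proof -
  define G where "G = Gs (piz q)"
  have qv: "qvec q \<noteq> 0"
  proof
    assume "qvec q = 0"
    then have "q = qof_real (c0 q)" by (rule qvec_zero_real)
    then show False using mr q z by (metis minimal_representative_def)
  qed
  obtain j1 j2 j3 where J: "Jq q = (0,j1,j2,j3)" "j1^2+j2^2+j3^2 = 1"
    using Jq_unit[OF qv] imag_units_iff by auto
  have G0: "c0 G = 0" using Gs0[OF pizO[OF q]] by (simp add: G_def)
  define r1 where "r1 = Re (c1 G)" define r2 where "r2 = Re (c2 G)" define r3 where "r3 = Re (c3 G)"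
  define i1 where "i1 = Im (c1 G)" define i2 where "i2 = Im (c2 G)" define i3 where "i3 = Im (c3 G)"
  have Gd: "G = (0, r1 + \<i> * i1, r2 + \<i> * i2, r3 + \<i> * i3)"
    using vec_decomp[OF G0] by (simp add: r1_def r2_def r3_def i1_def i2_def i3_def)
  have "Lq (0,j1,j2,j3) (0, r1 + \<i> * i1, r2 + \<i> * i2, r3 + \<i> * i3) = 0"
    using is_stem_at[OF Gs_stem ax q] z J(1) Gd by (simp add: G_def)
  from iso_from_zero[OF J(2) this] have "r1^2+r2^2+r3^2 = i1^2+i2^2+i3^2" "r1*i1 + r2*i2 + r3*i3 = 0" .
  then show ?thesis unfolding G_def[symmetric] Gd ssq_eq by simp
qed

lemma iso_zero:
  assumes q: "q \<in> \<Omega>" and s: "ssq (Gs (piz q)) = 0"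
  shows "\<exists>q'\<in>\<Omega>. gv q' = 0"
proof -
  define G where "G = Gs (piz q)"
  have Gnz: "G \<noteq> 0" using Gs_nz[OF q] by (simp add: G_def)
  have G0: "c0 G = 0" using Gs0[OF pizO[OF q]] by (simp add: G_def)
  define r1 where "r1 = Re (c1 G)" define r2 where "r2 = Re (c2 G)" define r3 where "r3 = Re (c3 G)"
  define i1 where "i1 = Im (c1 G)" define i2 where "i2 = Im (c2 G)" define i3 where "i3 = Im (c3 G)"
  have Gd: "G = (0, r1 + \<i> * i1, r2 + \<i> * i2, r3 + \<i> * i3)"
    using vec_decomp[OF G0] by (simp add: r1_def r2_def r3_def i1_def i2_def i3_def)
  have "ssq G = 0" using s by (simp add: G_def)
  then have e: "r1^2+r2^2+r3^2 = i1^2+i2^2+i3^2" "r1*i1 + r2*i2 + r3*i3 = 0"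
    unfolding Gd ssq_eq by (simp_all add: complex_eq_iff)
  define n where "n = i1^2+i2^2+i3^2"
  have n0: "n \<ge> 0" by (simp add: n_def)
  have "n \<noteq> 0"
  proof
    assume "n = 0"
    then have "i1 = 0" "i2 = 0" "i3 = 0" by (simp_all add: n_def add_nonneg_eq_0_iff)
    moreover have "r1 = 0" "r2 = 0" "r3 = 0" using e(1) \<open>n = 0\<close> by (simp_all add: n_def add_nonneg_eq_0_iff)
    ultimately have "G = 0" using Gd by (simp add: bquat_zero)
    then show False using Gnz by simp
  qed
  then have n: "n > 0" using n0 by simp
  define x where "x = c0 q"
  define y where "y = norm (qvec q)"
  have wxy: "piz q = Complex x y" by (simp add: piz_def x_def y_def)
  have qv: "qvec q \<noteq> 0"
  proof
    assume qv0: "qvec q = 0"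
    then have "Im (piz q) = 0" by (simp add: piz_def)
    then have "bcnj G = G" using Gs_real[OF pizO[OF q]] by (simp add: G_def)
    then have "i1 = 0" "i2 = 0" "i3 = 0" unfolding Gd by (simp_all add: bcnj_tuple complex_eq_iff)
    then show False using n by (simp add: n_def)
  qed
  have y: "y > 0" using qv by (simp add: y_def)
  have qd: "q = qof_real x + y *\<^sub>R Jq q" using q_decomp[of q] by (simp add: x_def y_def)
  define j1 where "j1 \<equiv> (r2*i3 - r3*i2)/n"
  define j2 where "j2 \<equiv> (r3*i1 - r1*i3)/n"
  define j3 where "j3 \<equiv> (r1*i2 - r2*i1)/n"
  have zz: "j1^2+j2^2+j3^2 = 1" "Lq (0,j1,j2,j3) (0, r1 + \<i> * i1, r2 + \<i> * i2, r3 + \<i> * i3) = 0"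
    using zero_from_iso[OF e(1)[unfolded n_def[symmetric]] n_def[symmetric] n e(2)]
    by (simp_all add: j1_def j2_def j3_def)
  have JS: "(0,j1,j2,j3) \<in> \<SS>" using zz(1) imag_units_iff by auto
  have qO: "qof_real x + y *\<^sub>R (0,j1,j2,j3) \<in> \<Omega>" using axsymD[OF ax Jq_unit[OF qv] JS] q qd by simp
  have "gv (qof_real x + y *\<^sub>R (0,j1,j2,j3)) = Lq (0,j1,j2,j3) G"
    using is_stem_at[OF Gs_stem ax qO] piz_xyJ[OF JS y] wxy by (simp add: G_def)
  then have "gv (qof_real x + y *\<^sub>R (0,j1,j2,j3)) = 0" using zz(2) Gd by simp
  then show ?thesis using qO by blast
qed

lemma HH_nz:
  assumes Z: "zero_set \<Omega> gv = {}" and q: "q \<in> \<Omega>"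
  shows "HH (piz q) \<noteq> 0"
proof
  assume "HH (piz q) = 0"
  then have "ssq (Gs (piz q)) = 0" using HH_sq[OF pizO[OF q]] by simp
  then obtain q' where "q' \<in> \<Omega>" "gv q' = 0" using iso_zero[OF q] by blast
  then have "q' \<in> zero_set \<Omega> gv" by (simp add: zero_set_def)
  then show False using Z by simp
qed

lemma HH_nz_all:
  assumes Z: "zero_set \<Omega> gv = {}" and z: "z \<in> slice_dom \<Omega>"
  shows "HH z \<noteq> 0"
proof (cases "Im z \<ge> 0")
  case True
  have "iota z \<in> \<Omega>" using z by (simp add: slice_dom_iff)
  then show ?thesis using HH_nz[OF Z] piz_iota[OF True] by metis
next
  case False
  have cz: "cnj z \<in> slice_dom \<Omega>" using slice_dom_cnj[OF ax z] .
  have "iota (cnj z) \<in> \<Omega>" using cz by (simp add: slice_dom_iff)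
  then have "HH (cnj z) \<noteq> 0" using HH_nz[OF Z] piz_iota[of "cnj z"] False by fastforce
  moreover have "HH (cnj z) = cnj (HH z)" using is_stem_cnj[OF Hs_stem z] by (simp add: HH_def c_bcnj)
  ultimately show ?thesis by auto
qed

lemma Pset_conn: "connected (piz ` \<Omega>)"
  using connected_continuous_image[OF cont_piz conn_O] .

lemma Pset_sub: "piz ` \<Omega> \<subseteq> slice_dom \<Omega>"
  using pizO by blast

lemma stem_cont:
  assumes "is_stem \<Omega> F f"
  shows "continuous_on (piz ` \<Omega>) (\<lambda>w. c0 (F w))" "continuous_on (piz ` \<Omega>) (\<lambda>w. c1 (F w))"
    "continuous_on (piz ` \<Omega>) (\<lambda>w. c2 (F w))" "continuous_on (piz ` \<Omega>) (\<lambda>w. c3 (F w))"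
  using holo_c[OF is_stem_holo[OF assms]] holomorphic_on_imp_continuous_on continuous_on_subset[OF _ Pset_sub]
  by blast+

lemma sec_facts:
  assumes fK: "f \<in> K_sections \<Omega> gv"
  obtains F N where "is_stem \<Omega> F f" "\<forall>q\<in>\<Omega>. c0 (F (piz q)) = 0"
    "\<forall>q\<in>\<Omega>. ssq (F (piz q)) = (complex_of_real (2 * of_int N * pi))^2"
    "\<forall>q\<in>\<Omega>. Ptup (F (piz q)) = hone"
    "\<forall>q\<in>\<Omega>. c2 (F (piz q)) * c3 (Gs (piz q)) - c3 (F (piz q)) * c2 (Gs (piz q)) = 0 \<and>
       c3 (F (piz q)) * c1 (Gs (piz q)) - c1 (F (piz q)) * c3 (Gs (piz q)) = 0 \<and>
       c1 (F (piz q)) * c2 (Gs (piz q)) - c2 (F (piz q)) * c1 (Gs (piz q)) = 0"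
proof -
  have SR: "SR_omega \<Omega> gv f" and E: "star_exp_is_one \<Omega> f" using fK by (simp_all add: K_sections_def)
  obtain F where F: "is_stem \<Omega> F f" using SR by (auto simp: SR_omega_def slice_regular_def)
  have LD: "locally_dependent \<Omega> (vect_part \<Omega> f) gv" using SR by (simp add: SR_omega_def)
  have P: "\<forall>q\<in>\<Omega>. Ptup (F (piz q)) = hone" using star_exp_one_D[OF ax F E] by blast
  obtain x0 where x0: "qof_real x0 \<in> \<Omega>" using realpt by blast
  define w0 where "w0 = piz (qof_real x0)"
  have w0r: "w0 = complex_of_real x0" by (simp add: w0_def)
  have w0P: "w0 \<in> piz ` \<Omega>" unfolding w0_def using x0 by (rule imageI)
  have Fr: "bcnj (F w0) = F w0"
    using is_stem_cnj[OF F pizO[OF x0]] by (simp add: w0_def)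
  have Fr0: "Im (c0 (F w0)) = 0" using Fr c_bcnj(1)[of "F w0"] by (metis Reals_cnj_iff complex_is_Real_iff)
  have g0w0: "c0 (F w0) = 0"
  proof -
    obtain k :: int where k: "c0 (F w0) = \<i> * complex_of_real (of_int k * pi)"
      using g0_form P x0 w0_def by blast
    then have "of_int k * pi = 0" using Fr0 by simp
    then show ?thesis using k by simp
  qed
  define \<phi> where "\<phi> w = c0 (F w) / (\<i> * complex_of_real pi)" for w
  have phiI: "\<forall>w\<in>piz ` \<Omega>. \<phi> w \<in> \<int>"
  proof
    fix w assume "w \<in> piz ` \<Omega>"
    then obtain q where q: "q \<in> \<Omega>" "w = piz q" by blast
    obtain k :: int where k: "c0 (F w) = \<i> * complex_of_real (of_int k * pi)"
      using g0_form P q by blast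
    have "\<phi> w = of_int k" using k by (simp add: \<phi>_def)
    then show "\<phi> w \<in> \<int>" by simp
  qed
  have phic: "continuous_on (piz ` \<Omega>) \<phi>"
    unfolding \<phi>_def by (intro continuous_intros stem_cont[OF F]) simp
  have g0: "\<forall>q\<in>\<Omega>. c0 (F (piz q)) = 0"
  proof
    fix q assume q: "q \<in> \<Omega>"
    have "\<phi> (piz q) = \<phi> w0" using int_const[OF Pset_conn phic phiI _ w0P] q by blast
    then show "c0 (F (piz q)) = 0" using g0w0 by (simp add: \<phi>_def)
  qed
  obtain N :: int where N: "ssq (F w0) = (complex_of_real (2 * of_int N * pi))^2"
    using s_form P x0 g0 w0_def by blast
  define \<psi> where "\<psi> w = ssq (F w) / (complex_of_real (2 * pi))^2" for w
  have psiI: "\<forall>w\<in>piz ` \<Omega>. \<psi> w \<in> \<int>"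
  proof
    fix w assume "w \<in> piz ` \<Omega>"
    then obtain q where q: "q \<in> \<Omega>" "w = piz q" by blast
    obtain j :: int where j: "ssq (F w) = (complex_of_real (2 * of_int j * pi))^2"
      using s_form P q g0 by blast
    have "\<psi> w = of_int (j^2)" using j by (simp add: \<psi>_def power_mult_distrib)
    then show "\<psi> w \<in> \<int>" by simp
  qed
  have psic: "continuous_on (piz ` \<Omega>) \<psi>"
    unfolding \<psi>_def ssq_def by (intro continuous_intros stem_cont[OF F]) simp
  have s: "\<forall>q\<in>\<Omega>. ssq (F (piz q)) = (complex_of_real (2 * of_int N * pi))^2"
  proof
    fix q assume q: "q \<in> \<Omega>"
    have "\<psi> (piz q) = \<psi> w0" using int_const[OF Pset_conn psic psiI _ w0P] q by blast
    then show "ssq (F (piz q)) = (complex_of_real (2 * of_int N * pi))^2" using N by (simp add: \<psi>_def)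
  qed
  have cr: "\<forall>q\<in>\<Omega>. c2 (F (piz q)) * c3 (Gs (piz q)) - c3 (F (piz q)) * c2 (Gs (piz q)) = 0 \<and>
       c3 (F (piz q)) * c1 (Gs (piz q)) - c1 (F (piz q)) * c3 (Gs (piz q)) = 0 \<and>
       c1 (F (piz q)) * c2 (Gs (piz q)) - c2 (F (piz q)) * c1 (Gs (piz q)) = 0"
    using cross_zero[OF ax F Gs_stem LD] by blast
  show ?thesis using that F g0 s P cr by blast
qed

lemma par3:
  fixes v1 v2 v3 g1 g2 g3 :: complex
  assumes nz: "g1 \<noteq> 0 \<or> g2 \<noteq> 0 \<or> g3 \<noteq> 0"
    and c1: "v2*g3 - v3*g2 = 0" and c2: "v3*g1 - v1*g3 = 0" and c3: "v1*g2 - v2*g1 = 0"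
  shows "g1 * cnj g1 + g2 * cnj g2 + g3 * cnj g3 \<noteq> 0"
    "v1 = (v1 * cnj g1 + v2 * cnj g2 + v3 * cnj g3) / (g1 * cnj g1 + g2 * cnj g2 + g3 * cnj g3) * g1"
    "v2 = (v1 * cnj g1 + v2 * cnj g2 + v3 * cnj g3) / (g1 * cnj g1 + g2 * cnj g2 + g3 * cnj g3) * g2"
    "v3 = (v1 * cnj g1 + v2 * cnj g2 + v3 * cnj g3) / (g1 * cnj g1 + g2 * cnj g2 + g3 * cnj g3) * g3"
proof -
  define D where "D = g1 * cnj g1 + g2 * cnj g2 + g3 * cnj g3"
  have "D = complex_of_real ((cmod g1)^2 + (cmod g2)^2 + (cmod g3)^2)"
    by (simp only: D_def of_real_add complex_norm_square)
  moreover have "(cmod g1)^2 + (cmod g2)^2 + (cmod g3)^2 > 0"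
    using nz by (auto simp: add_pos_nonneg add_nonneg_pos)
  ultimately have D: "D \<noteq> 0" by (metis less_irrefl of_real_eq_0_iff)
  then show "g1 * cnj g1 + g2 * cnj g2 + g3 * cnj g3 \<noteq> 0" by (simp add: D_def)
  define S where "S = v1 * cnj g1 + v2 * cnj g2 + v3 * cnj g3"
  have e1: "v1 * g2 = v2 * g1" "v1 * g3 = v3 * g1" "v2 * g3 = v3 * g2" using c1 c2 c3 by simp_all
  have q1: "v1 * D = S * g1"
  proof -
    have "v1 * D = v1*g1*cnj g1 + (v1*g2)*cnj g2 + (v1*g3)*cnj g3" by (simp add: D_def algebra_simps)
    also have "\<dots> = v1*g1*cnj g1 + (v2*g1)*cnj g2 + (v3*g1)*cnj g3" by (simp only: e1)
    also have "\<dots> = S * g1" by (simp add: S_def algebra_simps)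
    finally show ?thesis .
  qed
  have q2: "v2 * D = S * g2"
  proof -
    have "v2 * D = (v2*g1)*cnj g1 + v2*g2*cnj g2 + (v2*g3)*cnj g3" by (simp add: D_def algebra_simps)
    also have "\<dots> = (v1*g2)*cnj g1 + v2*g2*cnj g2 + (v3*g2)*cnj g3" by (simp only: e1)
    also have "\<dots> = S * g2" by (simp add: S_def algebra_simps)
    finally show ?thesis .
  qed
  have q3: "v3 * D = S * g3"
  proof -
    have "v3 * D = (v3*g1)*cnj g1 + (v3*g2)*cnj g2 + v3*g3*cnj g3" by (simp add: D_def algebra_simps)
    also have "\<dots> = (v1*g3)*cnj g1 + (v2*g3)*cnj g2 + v3*g3*cnj g3" by (simp only: e1)
    also have "\<dots> = S * g3" by (simp add: S_def algebra_simps)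
    finally show ?thesis .
  qed
  have r: "\<And>v g. v * D = S * g \<Longrightarrow> v = S / D * g"
  proof -
    fix v g assume "v * D = S * g"
    then have "v = S * g / D" by (subst nonzero_eq_divide_eq[OF D])
    then show "v = S / D * g" by simp
  qed
  show "v1 = (v1 * cnj g1 + v2 * cnj g2 + v3 * cnj g3) / (g1 * cnj g1 + g2 * cnj g2 + g3 * cnj g3) * g1"
    using r[OF q1] by (simp add: S_def D_def)
  show "v2 = (v1 * cnj g1 + v2 * cnj g2 + v3 * cnj g3) / (g1 * cnj g1 + g2 * cnj g2 + g3 * cnj g3) * g2"
    using r[OF q2] by (simp add: S_def D_def)
  show "v3 = (v1 * cnj g1 + v2 * cnj g2 + v3 * cnj g3) / (g1 * cnj g1 + g2 * cnj g2 + g3 * cnj g3) * g3"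
    using r[OF q3] by (simp add: S_def D_def)
qed

definition "lamF F w = (c1 (F w) * cnj (c1 (Gs w)) + c2 (F w) * cnj (c2 (Gs w)) + c3 (F w) * cnj (c3 (Gs w))) /
   (c1 (Gs w) * cnj (c1 (Gs w)) + c2 (Gs w) * cnj (c2 (Gs w)) + c3 (Gs w) * cnj (c3 (Gs w)))"

lemma par_at:
  assumes q: "q \<in> \<Omega>" and F0: "c0 (F (piz q)) = 0"
    and cr: "c2 (F (piz q)) * c3 (Gs (piz q)) - c3 (F (piz q)) * c2 (Gs (piz q)) = 0 \<and>
       c3 (F (piz q)) * c1 (Gs (piz q)) - c1 (F (piz q)) * c3 (Gs (piz q)) = 0 \<and>
       c1 (F (piz q)) * c2 (Gs (piz q)) - c2 (F (piz q)) * c1 (Gs (piz q)) = 0"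
  shows "F (piz q) = cmul (lamF F (piz q)) (Gs (piz q))"
    "ssq (F (piz q)) = (lamF F (piz q))^2 * (HH (piz q))^2"
    "c1 (Gs (piz q)) * cnj (c1 (Gs (piz q))) + c2 (Gs (piz q)) * cnj (c2 (Gs (piz q))) + c3 (Gs (piz q)) * cnj (c3 (Gs (piz q))) \<noteq> 0"
proof -
  define w where "w = piz q"
  have G0: "c0 (Gs w) = 0" using Gs0[OF pizO[OF q]] by (simp add: w_def)
  have "Gs w \<noteq> 0" using Gs_nz[OF q] by (simp add: w_def)
  then have nz: "c1 (Gs w) \<noteq> 0 \<or> c2 (Gs w) \<noteq> 0 \<or> c3 (Gs w) \<noteq> 0"
    using G0 by (cases "Gs w") (auto simp: cdefs bquat_zero)
  note p = par3[of "c1 (Gs w)" "c2 (Gs w)" "c3 (Gs w)" "c2 (F w)" "c3 (F w)" "c1 (F w)", OF nz]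
  have cr': "c2 (F w) * c3 (Gs w) - c3 (F w) * c2 (Gs w) = 0"
       "c3 (F w) * c1 (Gs w) - c1 (F w) * c3 (Gs w) = 0"
       "c1 (F w) * c2 (Gs w) - c2 (F w) * c1 (Gs w) = 0" using cr by (simp_all add: w_def)
  have v: "c1 (F w) = lamF F w * c1 (Gs w)" "c2 (F w) = lamF F w * c2 (Gs w)" "c3 (F w) = lamF F w * c3 (Gs w)"
    using p(2-4)[OF cr'] by (simp_all add: lamF_def)
  show "c1 (Gs (piz q)) * cnj (c1 (Gs (piz q))) + c2 (Gs (piz q)) * cnj (c2 (Gs (piz q))) + c3 (Gs (piz q)) * cnj (c3 (Gs (piz q))) \<noteq> 0"
    using p(1)[OF cr'] by (simp add: w_def)
  have Fw: "F w = cmul (lamF F w) (Gs w)"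
    using v F0 G0 by (cases "F w") (simp add: cmul_def cdefs w_def)
  then show "F (piz q) = cmul (lamF F (piz q)) (Gs (piz q))" by (simp add: w_def)
  have "ssq (F w) = (lamF F w)^2 * ssq (Gs w)" unfolding ssq_def using v
    by (simp add: power_mult_distrib algebra_simps)
  then show "ssq (F (piz q)) = (lamF F (piz q))^2 * (HH (piz q))^2"
    using HH_sq[OF pizO[OF q]] by (simp add: w_def)
qed

lemma K_Z_nonempty:
  assumes Z: "zero_set \<Omega> gv \<noteq> {}" and fK: "f \<in> K_sections \<Omega> gv" and q: "q \<in> \<Omega>"
  shows "f q = 0"
proof -
  obtain F N where F: "is_stem \<Omega> F f" and g0: "\<forall>q\<in>\<Omega>. c0 (F (piz q)) = 0"
    and s: "\<forall>q\<in>\<Omega>. ssq (F (piz q)) = (complex_of_real (2 * of_int N * pi))^2"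
    and P: "\<forall>q\<in>\<Omega>. Ptup (F (piz q)) = hone"
    and cr: "\<forall>q\<in>\<Omega>. c2 (F (piz q)) * c3 (Gs (piz q)) - c3 (F (piz q)) * c2 (Gs (piz q)) = 0 \<and>
       c3 (F (piz q)) * c1 (Gs (piz q)) - c1 (F (piz q)) * c3 (Gs (piz q)) = 0 \<and>
       c1 (F (piz q)) * c2 (Gs (piz q)) - c2 (F (piz q)) * c1 (Gs (piz q)) = 0"
    using sec_facts[OF fK] by blast
  obtain q0 where q0: "q0 \<in> \<Omega>" "gv q0 = 0" using Z by (auto simp: zero_set_def)
  have "ssq (Gs (piz q0)) = 0" using zero_ssq[OF q0] .
  then have "(HH (piz q0))^2 = 0" using HH_sq[OF pizO[OF q0(1)]] by simp
  then have "ssq (F (piz q0)) = 0" using par_at(2)[OF q0(1)] g0 cr q0(1) by simp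
  then have "(complex_of_real (2 * of_int N * pi))^2 = 0" using s q0(1) by simp
  then have s0: "ssq (F (piz q)) = 0" using s q by simp
  have "F (piz q) = 0" using vec_zero[of "F (piz q)"] P g0 s0 q by simp
  then show ?thesis using is_stem_at[OF F ax q] by simp
qed

lemma formula_q:
  assumes Z: "zero_set \<Omega> gv = {}" and q: "q \<in> \<Omega>"
  shows "Lq (Jq q) (cmul (complex_of_real c / HH (piz q)) (Gs (piz q))) = c *\<^sub>R hmul (qinv (h q)) (gv q)"
proof -
  define w where "w = piz q"
  have w: "w \<in> slice_dom \<Omega>" using pizO[OF q] by (simp add: w_def)
  have Hnz: "HH w \<noteq> 0" using HH_nz[OF Z q] by (simp add: w_def)
  have J: "Jq q \<in> \<SS> \<or> (Jq q = 0 \<and> Im (HH w) = 0)"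
  proof (cases "qvec q = 0")
    case True
    define x where "x = c0 q"
    have qr: "q = qof_real x" using qvec_zero_real[OF True] by (simp add: x_def)
    have wr: "w = complex_of_real x" using qr by (simp add: w_def)
    have "HH (cnj w) = cnj (HH w)" using is_stem_cnj[OF Hs_stem w] by (simp add: HH_def c_bcnj)
    then have "Im (HH w) = 0" using wr by (metis Reals_cnj_iff complex_cnj_complex_of_real complex_is_Real_iff)
    moreover have "Jq q = 0" using qr by simp
    ultimately show ?thesis by simp
  next
    case False then show ?thesis using Jq_unit by blast
  qed
  have "h q = Lq (Jq q) (HH w, 0, 0, 0)" using is_stem_at[OF Hs_stem ax q] Hs_eq[OF w] by (simp add: w_def)
  moreover have "gv q = Lq (Jq q) (Gs w)" using is_stem_at[OF Gs_stem ax q] by (simp add: w_def)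
  ultimately show ?thesis using formula[OF J Hnz] by (simp add: w_def)
qed

lemma K_Z_empty:
  assumes Z: "zero_set \<Omega> gv = {}" and fK: "f \<in> K_sections \<Omega> gv"
  shows "\<exists>n::int. \<forall>q\<in>\<Omega>. f q = (2 * of_int n * pi) *\<^sub>R hmul (qinv (h q)) (gv q)"
proof -
  obtain F N where F: "is_stem \<Omega> F f" and g0: "\<forall>q\<in>\<Omega>. c0 (F (piz q)) = 0"
    and s: "\<forall>q\<in>\<Omega>. ssq (F (piz q)) = (complex_of_real (2 * of_int N * pi))^2"
    and P: "\<forall>q\<in>\<Omega>. Ptup (F (piz q)) = hone"
    and cr: "\<forall>q\<in>\<Omega>. c2 (F (piz q)) * c3 (Gs (piz q)) - c3 (F (piz q)) * c2 (Gs (piz q)) = 0 \<and>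
       c3 (F (piz q)) * c1 (Gs (piz q)) - c1 (F (piz q)) * c3 (Gs (piz q)) = 0 \<and>
       c1 (F (piz q)) * c2 (Gs (piz q)) - c2 (F (piz q)) * c1 (Gs (piz q)) = 0"
    using sec_facts[OF fK] by blast
  show ?thesis
  proof (cases "N = 0")
    case True
    have "f q = 0" if q: "q \<in> \<Omega>" for q
    proof -
      have "F (piz q) = 0" using vec_zero[of "F (piz q)"] P g0 s q True by simp
      then show ?thesis using is_stem_at[OF F ax q] by simp
    qed
    then show ?thesis by (intro exI[of _ 0]) simp
  next
    case False
    define c where "c = complex_of_real (2 * of_int N * pi)"
    have c0: "c \<noteq> 0" using False by (simp add: c_def)
    define \<phi> where "\<phi> w = lamF F w * HH w / c" for w
    have sq: "(\<phi> (piz q))^2 = 1" if q: "q \<in> \<Omega>" for q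
    proof -
      have "(lamF F (piz q) * HH (piz q))^2 = c^2"
        using par_at(2)[where F=F, OF q bspec[OF g0 q] bspec[OF cr q]] s q by (simp add: c_def power_mult_distrib)
      then show ?thesis using c0 by (simp add: \<phi>_def power_divide)
    qed
    have phiI: "\<forall>w\<in>piz ` \<Omega>. \<phi> w \<in> \<int>"
    proof
      fix w assume "w \<in> piz ` \<Omega>"
      then obtain q where q: "q \<in> \<Omega>" "w = piz q" by blast
      have "\<phi> w = 1 \<or> \<phi> w = -1" using sq[OF q(1)] q(2) by (simp add: power2_eq_1_iff)
      then show "\<phi> w \<in> \<int>" by auto
    qed
    have phic: "continuous_on (piz ` \<Omega>) \<phi>"
    proof -
      have "continuous_on (piz ` \<Omega>) (lamF F)"
        unfolding lamF_def[abs_def]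
        by (intro continuous_intros stem_cont[OF F] stem_cont[OF Gs_stem])
           (use par_at(3) g0 cr in \<open>auto simp: lamF_def\<close>)
      moreover have "continuous_on (piz ` \<Omega>) HH"
        using stem_cont(1)[OF Hs_stem] by (simp add: HH_def[abs_def])
      ultimately show ?thesis unfolding \<phi>_def by (intro continuous_intros) (auto simp: c0)
    qed
    obtain x0 where x0: "qof_real x0 \<in> \<Omega>" using realpt by blast
    define \<sigma> where "\<sigma> = \<phi> (piz (qof_real x0))"
    have sig: "\<sigma> = 1 \<or> \<sigma> = -1" using sq[OF x0] by (simp add: \<sigma>_def power2_eq_1_iff)
    define si :: int where "si = (if \<sigma> = 1 then 1 else -1)"
    have sis: "\<sigma> = of_int si" using sig by (auto simp: si_def)
    define n where "n = si * N"
    have "f q = (2 * of_int n * pi) *\<^sub>R hmul (qinv (h q)) (gv q)" if q: "q \<in> \<Omega>" for q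
    proof -
      define w where "w = piz q"
      have "\<phi> w = \<sigma>" unfolding \<sigma>_def w_def
        by (rule int_const[OF Pset_conn phic phiI]) (use q x0 imageI[OF x0, of piz] in simp_all)
      then have "lamF F w * HH w = \<sigma> * c" using c0 by (simp add: \<phi>_def field_simps)
      then have "lamF F w * HH w = complex_of_real (2 * of_int n * pi)"
        by (simp add: sis c_def n_def)
      then have l: "lamF F w = complex_of_real (2 * of_int n * pi) / HH w"
        using HH_nz[OF Z q] by (simp add: w_def field_simps)
      have "F w = cmul (complex_of_real (2 * of_int n * pi) / HH w) (Gs w)"
        using par_at(1)[where F=F, OF q bspec[OF g0 q] bspec[OF cr q]] l by (simp add: w_def)
      then have "f q = Lq (Jq q) (cmul (complex_of_real (2 * of_int n * pi) / HH (piz q)) (Gs (piz q)))"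
        using is_stem_at[OF F ax q] by (simp add: w_def)
      then show ?thesis using formula_q[OF Z q, of "2 * of_int n * pi"] by (simp only:)
    qed
    then show ?thesis by blast
  qed
qed

lemma one_stem: "is_stem \<Omega> (\<lambda>z. (1,0,0,0)) (\<lambda>q. hone)"
  unfolding is_stem_def holo_stem_def
  by (simp add: cdefs bcnj_tuple slicefun_eq Lq_hone[unfolded hone_def] hone_def)

lemma one_sp: "slice_preserving \<Omega> (\<lambda>q. hone)"
  unfolding slice_preserving_def using one_stem by (auto simp: cdefs)

lemma LD_intro:
  assumes V: "is_stem \<Omega> V fv" and B: "is_stem \<Omega> B \<beta>"
    and Bf: "\<forall>z\<in>slice_dom \<Omega>. B z = (c0 (B z),0,0,0)"
    and rel: "\<forall>z\<in>slice_dom \<Omega>. V z + cmul (c0 (B z)) (Gs z) = 0"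
  shows "locally_dependent \<Omega> fv gv"
  unfolding locally_dependent_def
proof
  fix p assume p: "p \<in> \<Omega>"
  have cB: "\<forall>z\<in>slice_dom \<Omega>. c1 (B z) = 0 \<and> c2 (B z) = 0 \<and> c3 (B z) = 0"
  proof
    fix z assume z: "z \<in> slice_dom \<Omega>"
    show "c1 (B z) = 0 \<and> c2 (B z) = 0 \<and> c3 (B z) = 0" using bspec[OF Bf z]
      by (metis c1_def c2_def c3_def fst_conv snd_conv)
  qed
  have spB: "slice_preserving \<Omega> \<beta>" unfolding slice_preserving_def using B cB by blast
  have r: "star \<Omega> (\<lambda>q. hone) fv q + star \<Omega> \<beta> gv q = 0" if q: "q \<in> \<Omega>" for q
  proof -
    have w: "piz q \<in> slice_dom \<Omega>" using pizO[OF q] .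
    have "hmul (1,0,0,0) (V (piz q)) + hmul (B (piz q)) (Gs (piz q)) = V (piz q) + cmul (c0 (B (piz q))) (Gs (piz q))"
      using bspec[OF Bf w] by (metis hmul_scal cmul_def mult_1 surj_pair prod.collapse cdefs)
    also have "\<dots> = 0" using rel w by blast
    finally show ?thesis
      unfolding star_eq[OF ax one_stem V q] star_eq[OF ax B Gs_stem q] Lq_add[symmetric] by simp
  qed
  show "\<exists>U. p \<in> U \<and> U \<subseteq> \<Omega> \<and> open U \<and> connected U \<and> axially_symmetric U \<and>
      (\<exists>\<alpha> \<beta>. slice_preserving U \<alpha> \<and> slice_preserving U \<beta> \<and>
         (\<exists>q\<in>U. \<alpha> q \<noteq> 0 \<or> \<beta> q \<noteq> 0) \<and>
         (\<forall>q\<in>U. star U \<alpha> fv q + star U \<beta> gv q = 0))"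
  proof -
    have h1: "(hone::quat) \<noteq> 0" by (simp add: hone_def quat_zero)
    have W: "slice_preserving \<Omega> (\<lambda>q::quat. hone::quat) \<and> slice_preserving \<Omega> \<beta> \<and>
       (\<exists>q\<in>\<Omega>. (\<lambda>q::quat. hone::quat) q \<noteq> 0 \<or> \<beta> q \<noteq> 0) \<and>
       (\<forall>q\<in>\<Omega>. star \<Omega> (\<lambda>q::quat. hone::quat) fv q + star \<Omega> \<beta> gv q = 0)"
      using one_sp spB r p h1 by blast
    show ?thesis
      apply (rule exI[of _ \<Omega>])
      apply (intro conjI)
           apply (rule p) apply (rule subset_refl) apply (rule open_O) apply (rule conn_O) apply (rule ax)
      apply (rule exI[of _ "\<lambda>q::quat. hone::quat"], rule exI[of _ \<beta>])
      using W by simp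
  qed
qed

lemma ssq_cmul: "ssq (cmul a X) = a^2 * ssq X"
  by (simp add: cmul_def cdefs ssq_def power_mult_distrib algebra_simps)

lemma K_intro_formula:
  assumes Z: "zero_set \<Omega> gv = {}"
    and f: "\<forall>q\<in>\<Omega>. f q = (2 * of_int n * pi) *\<^sub>R hmul (qinv (h q)) (gv q)"
  shows "f \<in> K_sections \<Omega> gv"
proof -
  define c :: real where "c = 2 * of_int n * pi"
  define Fs where "Fs z = cmul (complex_of_real c / HH z) (Gs z)" for z
  have hG: "holo_stem (slice_dom \<Omega>) Gs" using is_stem_holo[OF Gs_stem] .
  have hH: "HH holomorphic_on slice_dom \<Omega>"
    using holo_c(1)[OF is_stem_holo[OF Hs_stem]] by (simp add: HH_def[abs_def])
  have Hnz: "\<And>z. z \<in> slice_dom \<Omega> \<Longrightarrow> HH z \<noteq> 0" using HH_nz_all[OF Z] .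
  have hinv: "(\<lambda>z. complex_of_real c / HH z) holomorphic_on slice_dom \<Omega>"
    using hH Hnz by (intro holomorphic_intros) auto
  have Fst: "is_stem \<Omega> Fs f"
    unfolding is_stem_def holo_stem_def
  proof (intro conjI ballI)
    show "(\<lambda>z. c0 (Fs z)) holomorphic_on slice_dom \<Omega>" unfolding Fs_def cmul_def c0_def
      using holomorphic_on_mult[OF hinv holo_c(1)[OF hG]] by (simp add: c0_def)
    show "(\<lambda>z. c1 (Fs z)) holomorphic_on slice_dom \<Omega>" unfolding Fs_def cmul_def
      using holomorphic_on_mult[OF hinv holo_c(2)[OF hG]] by (simp add: cdefs)
    show "(\<lambda>z. c2 (Fs z)) holomorphic_on slice_dom \<Omega>" unfolding Fs_def cmul_def
      using holomorphic_on_mult[OF hinv holo_c(3)[OF hG]] by (simp add: cdefs)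
    show "(\<lambda>z. c3 (Fs z)) holomorphic_on slice_dom \<Omega>" unfolding Fs_def cmul_def
      using holomorphic_on_mult[OF hinv holo_c(4)[OF hG]] by (simp add: cdefs)
    fix z assume z: "z \<in> slice_dom \<Omega>"
    have "HH (cnj z) = cnj (HH z)" using is_stem_cnj[OF Hs_stem z] by (simp add: HH_def c_bcnj)
    then show "Fs (cnj z) = bcnj (Fs z)"
      unfolding Fs_def bcnj_cmul is_stem_cnj[OF Gs_stem z] by simp
  next
    fix q assume q: "q \<in> \<Omega>"
    show "f q = slicefun Fs q" unfolding slicefun_eq Fs_def using formula_q[OF Z q, of c] f q
      by (simp add: c_def)
  qed
  have F0: "c0 (Fs z) = 0" if "z \<in> slice_dom \<Omega>" for z
    using Gs0[OF that] by (simp add: Fs_def cmul_def cdefs)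
  have sr: "slice_regular \<Omega> f" using Fst by (auto simp: slice_regular_def)
  define Bs where "Bs z = (- (complex_of_real c / HH z), 0::complex, 0::complex, 0::complex)" for z
  have Bst: "is_stem \<Omega> Bs (slicefun Bs)"
    unfolding is_stem_def holo_stem_def
  proof (intro conjI ballI)
    show "(\<lambda>z. c0 (Bs z)) holomorphic_on slice_dom \<Omega>" unfolding Bs_def cdefs
      using hinv by (simp add: holomorphic_on_minus)
    show "(\<lambda>z. c1 (Bs z)) holomorphic_on slice_dom \<Omega>" by (simp add: Bs_def cdefs)
    show "(\<lambda>z. c2 (Bs z)) holomorphic_on slice_dom \<Omega>" by (simp add: Bs_def cdefs)
    show "(\<lambda>z. c3 (Bs z)) holomorphic_on slice_dom \<Omega>" by (simp add: Bs_def cdefs)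
    fix z assume z: "z \<in> slice_dom \<Omega>"
    have "HH (cnj z) = cnj (HH z)" using is_stem_cnj[OF Hs_stem z] by (simp add: HH_def c_bcnj)
    then show "Bs (cnj z) = bcnj (Bs z)" by (simp add: Bs_def bcnj_tuple)
  qed simp
  have LD: "locally_dependent \<Omega> (vect_part \<Omega> f) gv"
  proof (rule LD_intro[OF vect_part_stem[OF ax Fst] Bst])
    show "\<forall>z\<in>slice_dom \<Omega>. Bs z = (c0 (Bs z), 0, 0, 0)" by (simp add: Bs_def cdefs)
    show "\<forall>z\<in>slice_dom \<Omega>. vst (Fs z) + cmul (c0 (Bs z)) (Gs z) = 0"
    proof
      fix z assume z: "z \<in> slice_dom \<Omega>"
      have "vst (Fs z) = Fs z" using F0[OF z] by (cases "Fs z") (simp add: vst_def cdefs)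
      then show "vst (Fs z) + cmul (c0 (Bs z)) (Gs z) = 0"
        by (simp add: Fs_def Bs_def cmul_def cdefs bquat_zero)
    qed
  qed
  have E: "star_exp_is_one \<Omega> f"
  proof (rule star_exp_one_of[OF ax Fst], intro ballI)
    fix q assume q: "q \<in> \<Omega>"
    define w where "w = piz q"
    have w: "w \<in> slice_dom \<Omega>" using pizO[OF q] by (simp add: w_def)
    have Hw: "HH w \<noteq> 0" using Hnz[OF w] .
    have "ssq (Fs w) = (complex_of_real c / HH w)^2 * ssq (Gs w)"
      unfolding Fs_def by (rule ssq_cmul)
    also have "\<dots> = (complex_of_real c)^2" using Hw by (simp add: HH_sq[OF w, symmetric] power_divide)
    finally have s: "ssq (Fs w) = (complex_of_real (2 * of_int n * pi))^2" by (simp add: c_def)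
    have nz: "n \<noteq> 0 \<or> Fs w = 0"
    proof (cases "n = 0")
      case True then show ?thesis by (simp add: Fs_def c_def cmul_def bquat_zero)
    qed simp
    show "Ptup (Fs (piz q)) = hone" using P_hone_of[OF F0[OF w] s nz] by (simp add: w_def)
  qed
  show ?thesis using sr LD E by (simp add: K_sections_def SR_omega_def)
qed

lemma K_intro_zero:
  assumes f: "\<forall>q\<in>\<Omega>. f q = 0"
  shows "f \<in> K_sections \<Omega> gv"
proof -
  define Fs :: "complex \<Rightarrow> bquat" where "Fs z = 0" for z
  have Fst: "is_stem \<Omega> Fs f"
    using f by (simp add: is_stem_def holo_stem_def Fs_def cdefs bcnj_zero slicefun_eq)
  have sr: "slice_regular \<Omega> f" using Fst by (auto simp: slice_regular_def)
  define Bs :: "complex \<Rightarrow> bquat" where "Bs z = 0" for z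
  have Bst: "is_stem \<Omega> Bs (slicefun Bs)"
    by (simp add: is_stem_def holo_stem_def Bs_def cdefs bcnj_zero)
  have LD: "locally_dependent \<Omega> (vect_part \<Omega> f) gv"
  proof (rule LD_intro[OF vect_part_stem[OF ax Fst] Bst])
    show "\<forall>z\<in>slice_dom \<Omega>. Bs z = (c0 (Bs z), 0, 0, 0)" by (simp add: Bs_def cdefs bquat_zero)
    show "\<forall>z\<in>slice_dom \<Omega>. vst (Fs z) + cmul (c0 (Bs z)) (Gs z) = 0"
      by (simp add: Fs_def Bs_def vst_def cmul_def cdefs bquat_zero)
  qed
  have E: "star_exp_is_one \<Omega> f"
  proof (rule star_exp_one_of[OF ax Fst], intro ballI)
    fix q assume q: "q \<in> \<Omega>"
    show "Ptup (Fs (piz q)) = hone"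
      by (rule P_hone_of[where n=0]) (simp_all add: Fs_def cdefs ssq_def bquat_zero)
  qed
  show ?thesis using sr LD E by (simp add: K_sections_def SR_omega_def)
qed

lemma n_unique:
  assumes Z: "zero_set \<Omega> gv = {}"
    and e: "\<forall>q\<in>\<Omega>. (2 * of_int n * pi) *\<^sub>R hmul (qinv (h q)) (gv q) = (2 * of_int m * pi) *\<^sub>R hmul (qinv (h q)) (gv q)"
  shows "n = m"
proof -
  obtain x0 where x0: "qof_real x0 \<in> \<Omega>" using realpt by blast
  define q where "q = qof_real x0"
  define w where "w = piz q"
  have q: "q \<in> \<Omega>" using x0 by (simp add: q_def)
  have w: "w \<in> slice_dom \<Omega>" using pizO[OF q] by (simp add: w_def)
  have wr: "w = complex_of_real x0" by (simp add: w_def q_def)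
  define P where "P = cmul (complex_of_real 1 / HH w) (Gs w)"
  have X: "hmul (qinv (h q)) (gv q) = Lq 0 P"
    using formula_q[OF Z q, of 1] by (simp add: P_def w_def q_def)
  have Hw: "HH w \<noteq> 0" using HH_nz[OF Z q] by (simp add: w_def)
  have Gw: "Gs w \<noteq> 0" using Gs_nz[OF q] by (simp add: w_def)
  have Pnz: "P \<noteq> 0"
  proof
    assume "P = 0"
    then have "Gs w = 0" using Hw unfolding P_def
      by (cases "Gs w") (simp add: cmul_def cdefs bquat_zero)
    then show False using Gw by simp
  qed
  have HHr: "cnj (HH w) = HH w"
  proof -
    have "HH (cnj w) = cnj (HH w)" using is_stem_cnj[OF Hs_stem w] by (simp add: HH_def c_bcnj)
    then show ?thesis using wr by simp
  qed
  have Pr: "bcnj P = P" unfolding P_def bcnj_cmul using Gs_real[OF w] wr HHr by simp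
  have "Lq 0 P \<noteq> 0"
  proof
    assume L0: "Lq 0 P = 0"
    have "bre P = bre 0" using L0 Lq_real_bcnj(1)[OF Pr] by simp
    moreover have "bim P = bim 0" using Lq_real_bcnj(2)[OF Pr] by simp
    ultimately have "P = 0" by (rule bre_bim_eq)
    then show False using Pnz by simp
  qed
  then have nz: "hmul (qinv (h q)) (gv q) \<noteq> 0" using X by simp
  have "(2 * of_int n * pi) *\<^sub>R hmul (qinv (h q)) (gv q) = (2 * of_int m * pi) *\<^sub>R hmul (qinv (h q)) (gv q)"
    using e q by blast
  then have "2 * of_int n * pi = 2 * of_int m * (pi::real)" using nz by (simp add: scaleR_cancel_right)
  then show ?thesis by simp
qed

end

theorem mainTheorem11:
  fixes \<Omega> :: "quat set" and gv h :: "quat \<Rightarrow> quat"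
  assumes "axially_symmetric \<Omega>" and "slice_domain \<Omega>"
    and "minimal_representative \<Omega> gv"
    and "slice_preserving \<Omega> h"
    and "\<forall>q\<in>\<Omega>. star \<Omega> h h q = symmetrization \<Omega> gv q"
  shows "(zero_set \<Omega> gv = {} \<longrightarrow>
           (\<forall>f. f \<in> K_sections \<Omega> gv \<longleftrightarrow>
              (\<exists>n::int. \<forall>q\<in>\<Omega>. f q = (2 * of_int n * pi) *\<^sub>R hmul (qinv (h q)) (gv q))) \<and>
           (\<forall>n m::int. (\<forall>q\<in>\<Omega>. (2 * of_int n * pi) *\<^sub>R hmul (qinv (h q)) (gv q)
                                = (2 * of_int m * pi) *\<^sub>R hmul (qinv (h q)) (gv q)) \<longrightarrow> n = m))
       \<and> (zero_set \<Omega> gv \<noteq> {} \<longrightarrow>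
           (\<forall>f. f \<in> K_sections \<Omega> gv \<longleftrightarrow> (\<forall>q\<in>\<Omega>. f q = 0)))"
proof (intro conjI impI allI)
  fix f assume Z: "zero_set \<Omega> gv = {}"
  show "f \<in> K_sections \<Omega> gv \<longleftrightarrow>
              (\<exists>n::int. \<forall>q\<in>\<Omega>. f q = (2 * of_int n * pi) *\<^sub>R hmul (qinv (h q)) (gv q))"
    using K_Z_empty[OF assms Z] K_intro_formula[OF assms Z] by blast
next
  fix n m :: int
  assume "zero_set \<Omega> gv = {}"
    "\<forall>q\<in>\<Omega>. (2 * of_int n * pi) *\<^sub>R hmul (qinv (h q)) (gv q) = (2 * of_int m * pi) *\<^sub>R hmul (qinv (h q)) (gv q)"
  then show "n = m" using n_unique[OF assms] by blast
next
  fix f assume Z: "zero_set \<Omega> gv \<noteq> {}"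
  show "f \<in> K_sections \<Omega> gv \<longleftrightarrow> (\<forall>q\<in>\<Omega>. f q = 0)"
    using K_Z_nonempty[OF assms Z] K_intro_zero[OF assms] by blast
qed


end
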